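(* Let $G$ be a group with a split $BN$-pair $(H,U,N)$ with finite Weyl group, let $n_0\in N$ represent the longest element of the Weyl group and $U^-:=U^{n_0}$. Then $H\cap UU^-U=\{1\}$.
   Context: A split $BN$-pair $(H,U,N)$ for $G$ means $B=H\ltimes U$ and $N$ satisfy the axioms of split $BN$-pairs (as in Carter, Finite Groups of Lie Type, \S 2.5) with $H=B\cap N$. Products are setwise. *)

theory Defs
  imports "HOL-Algebra.Algebra"
begin

text \<open>Weyl group W = N/H realised as the set of right cosets H n (n in N),
  with setwise product; its identity is H.\<close>

definition weyl_group :: "('a, 'b) monoid_scheme \<Rightarrow> 'a set \<Rightarrow> 'a set \<Rightarrow> 'a set set" where
  "weyl_group G H N = {H #>\<^bsub>G\<^esub> n | n. n \<in> N}"

definition coset_word_prod :: "('a, 'b) monoid_scheme \<Rightarrow> 'a set \<Rightarrow> 'a set list \<Rightarrow> 'a set" where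
  "coset_word_prod G H ws = foldr (\<lambda>w acc. w <#>\<^bsub>G\<^esub> acc) ws H"

definition weyl_length :: "('a, 'b) monoid_scheme \<Rightarrow> 'a set \<Rightarrow> 'a set set \<Rightarrow> 'a set \<Rightarrow> nat" where
  "weyl_length G H S w =
     (LEAST k. \<exists>ws. set ws \<subseteq> S \<and> length ws = k \<and> coset_word_prod G H ws = w)"

text \<open>BN-pair axioms (Carter, Finite Groups of Lie Type, 2.1), with H = B \<inter> N and
  S the distinguished set of involutions generating W.\<close>
definition BN_pair :: "('a, 'b) monoid_scheme \<Rightarrow> 'a set \<Rightarrow> 'a set \<Rightarrow> 'a set set \<Rightarrow> bool" where
  "BN_pair G B N S \<longleftrightarrow>
     group G \<and> subgroup B G \<and> subgroup N G \<and>
     generate G (B \<union> N) = carrier G \<and>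
     normal (B \<inter> N) (G\<lparr>carrier := N\<rparr>) \<and>
     S \<subseteq> weyl_group G (B \<inter> N) N \<and>
     (\<forall>s\<in>S. s \<noteq> B \<inter> N \<and> s <#>\<^bsub>G\<^esub> s = B \<inter> N) \<and>
     (\<forall>w\<in>weyl_group G (B \<inter> N) N. \<exists>ws. set ws \<subseteq> S \<and> coset_word_prod G (B \<inter> N) ws = w) \<and>
     (\<forall>s\<in>S. \<forall>ns\<in>s. (ns <#\<^bsub>G\<^esub> B) #>\<^bsub>G\<^esub> ns \<noteq> B) \<and>
     (\<forall>s\<in>S. \<forall>ns\<in>s. \<forall>n\<in>N.
        (ns <#\<^bsub>G\<^esub> B) #>\<^bsub>G\<^esub> n \<subseteq>
          ((B #>\<^bsub>G\<^esub> n) <#>\<^bsub>G\<^esub> B) \<union> ((B #>\<^bsub>G\<^esub> (ns \<otimes>\<^bsub>G\<^esub> n)) <#>\<^bsub>G\<^esub> B))"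

definition split_BN_pair ::
  "('a, 'b) monoid_scheme \<Rightarrow> 'a set \<Rightarrow> 'a set \<Rightarrow> 'a set \<Rightarrow> 'a set set \<Rightarrow> bool" where
  "split_BN_pair G H U N S \<longleftrightarrow>
     (let B = U <#>\<^bsub>G\<^esub> H in
       BN_pair G B N S \<and> H = B \<inter> N \<and>
       subgroup U G \<and> subgroup H G \<and>
       normal U (G\<lparr>carrier := B\<rparr>) \<and>
       U \<inter> H = {\<one>\<^bsub>G\<^esub>} \<and>
       (\<Inter>n\<in>N. (n <#\<^bsub>G\<^esub> B) #>\<^bsub>G\<^esub> inv\<^bsub>G\<^esub> n) = H)"

end

theory Submission
  imports Defs
begin

definition wprod :: "('c, 'd) monoid_scheme \<Rightarrow> 'c list \<Rightarrow> 'c" where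
  "wprod W ws = foldr (\<lambda>w acc. w \<otimes>\<^bsub>W\<^esub> acc) ws \<one>\<^bsub>W\<^esub>"

definition wlen :: "('c, 'd) monoid_scheme \<Rightarrow> 'c set \<Rightarrow> 'c \<Rightarrow> nat" where
  "wlen W S w = (LEAST k. \<exists>ws. set ws \<subseteq> S \<and> length ws = k \<and> wprod W ws = w)"

fun alt :: "'a \<Rightarrow> 'a \<Rightarrow> nat \<Rightarrow> 'a list" where
  "alt a b 0 = []"
| "alt a b (Suc n) = a # alt b a n"

lemma alt_set: "set (alt a b n) \<subseteq> {a, b}"
  by (induction n arbitrary: a b) auto

lemma alt_length[simp]: "length (alt a b n) = n"
  by (induction n arbitrary: a b) auto

lemma alt_add: "alt a b (n + m) = alt a b n @ alt (if even n then a else b) (if even n then b else a) m"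
  by (induction n arbitrary: a b) auto

lemma alt_take: "i \<le> n \<Longrightarrow> take i (alt a b n) = alt a b i"
  using alt_add[of a b i "n - i"] by simp

lemma alt_drop: "i \<le> n \<Longrightarrow> drop i (alt a b n) = alt (if even i then a else b) (if even i then b else a) (n - i)"
  using alt_add[of a b i "n - i"] by simp

lemma alt_snoc: "alt a b (Suc n) = alt a b n @ [if even n then a else b]"
  using alt_add[of a b n 1] by simp

locale cox0 = group W for W (structure) +
  fixes S
  assumes S_sub: "S \<subseteq> carrier W"
    and S_sq: "s \<in> S \<Longrightarrow> s \<otimes> s = \<one>"
    and S_ne: "s \<in> S \<Longrightarrow> s \<noteq> \<one>"
    and S_gen: "w \<in> carrier W \<Longrightarrow> \<exists>ws. set ws \<subseteq> S \<and> wprod W ws = w"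
begin

abbreviation "wp \<equiv> wprod W"
abbreviation "len \<equiv> wlen W S"

lemma S_car: "s \<in> S \<Longrightarrow> s \<in> carrier W" using S_sub by blast

lemma wp_Nil[simp]: "wp [] = \<one>" by (simp add: wprod_def)
lemma wp_Cons[simp]: "wp (x # xs) = x \<otimes> wp xs" by (simp add: wprod_def)

lemma wp_closed[intro, simp]: "set ws \<subseteq> S \<Longrightarrow> wp ws \<in> carrier W"
  by (induction ws) (auto simp: S_car)

lemma wp_append: "set xs \<subseteq> S \<Longrightarrow> set ys \<subseteq> S \<Longrightarrow> wp (xs @ ys) = wp xs \<otimes> wp ys"
  by (induction xs) (auto simp: S_car m_assoc)

lemma S_inv: "s \<in> S \<Longrightarrow> inv s = s"
  using S_sq S_car inv_equality by blast

lemma wp_rev: "set ws \<subseteq> S \<Longrightarrow> inv (wp ws) = wp (rev ws)"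
proof (induction ws)
  case Nil then show ?case by simp
next
  case (Cons x ws)
  then have "inv (wp (x # ws)) = inv (wp ws) \<otimes> inv x"
    by (simp add: inv_mult_group S_car)
  also have "\<dots> = wp (rev ws) \<otimes> wp [x]" using Cons by (simp add: S_inv S_car)
  also have "\<dots> = wp (rev (x # ws))" using Cons by (simp add: wp_append)
  finally show ?case .
qed

lemma len_ex: assumes "w \<in> carrier W"
  shows "\<exists>ws. set ws \<subseteq> S \<and> length ws = len w \<and> wp ws = w"
proof -
  from S_gen[OF assms] obtain ws where "set ws \<subseteq> S" "wp ws = w" by blast
  then have "\<exists>k ws. set ws \<subseteq> S \<and> length ws = k \<and> wp ws = w" by blast
  then show ?thesis unfolding wlen_def by (rule LeastI_ex)
qed

lemma len_le: "set ws \<subseteq> S \<Longrightarrow> len (wp ws) \<le> length ws"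
  unfolding wlen_def by (rule Least_le) blast

lemma len_one[simp]: "len \<one> = 0"
  using len_le[of "[]"] by simp

lemma len_zero: "w \<in> carrier W \<Longrightarrow> len w = 0 \<Longrightarrow> w = \<one>"
  using len_ex by fastforce

lemma len_mult: assumes "a \<in> carrier W" "b \<in> carrier W"
  shows "len (a \<otimes> b) \<le> len a + len b"
proof -
  obtain xs where xs: "set xs \<subseteq> S" "length xs = len a" "wp xs = a" using len_ex assms by blast
  obtain ys where ys: "set ys \<subseteq> S" "length ys = len b" "wp ys = b" using len_ex assms by blast
  have "len (a \<otimes> b) = len (wp (xs @ ys))" using xs ys by (simp add: wp_append)
  also have "\<dots> \<le> length (xs @ ys)" using xs ys by (intro len_le) auto
  finally show ?thesis using xs ys by simp
qed

lemma len_inv_le: assumes "w \<in> carrier W" shows "len (inv w) \<le> len w"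
proof -
  obtain xs where xs: "set xs \<subseteq> S" "length xs = len w" "wp xs = w" using len_ex assms by blast
  then have "inv w = wp (rev xs)" using wp_rev by auto
  then show ?thesis using len_le[of "rev xs"] xs by auto
qed

lemma len_inv[simp]: assumes "w \<in> carrier W" shows "len (inv w) = len w"
  using len_inv_le[OF assms] len_inv_le[of "inv w"] assms by simp

lemma len_S[simp]: assumes s: "s \<in> S" shows "len s = 1"
proof -
  have "wp [s] = s" using s S_car by simp
  then have "len s \<le> 1" using len_le[of "[s]"] s by simp
  moreover have "len s \<noteq> 0" using len_zero[of s] S_ne s S_car by blast
  ultimately show ?thesis by linarith
qed

lemma len_Sm: assumes "s \<in> S" "w \<in> carrier W"
  shows "len (s \<otimes> w) \<le> Suc (len w)" "len w \<le> Suc (len (s \<otimes> w))"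
proof -
  show "len (s \<otimes> w) \<le> Suc (len w)" using len_mult[of s w] assms S_car by simp
  have "s \<otimes> (s \<otimes> w) = (s \<otimes> s) \<otimes> w" using assms S_car by (simp add: m_assoc)
  then have "w = s \<otimes> (s \<otimes> w)" using assms S_car S_sq[of s] by simp
  then have "len w = len (s \<otimes> (s \<otimes> w))" by simp
  also have "\<dots> \<le> Suc (len (s \<otimes> w))" using len_mult[of s "s \<otimes> w"] assms S_car by simp
  finally show "len w \<le> Suc (len (s \<otimes> w))" .
qed

definition red :: "'a list \<Rightarrow> bool" where
  "red ws \<longleftrightarrow> set ws \<subseteq> S \<and> length ws = len (wp ws)"

lemma red_append: assumes "red (xs @ ys)" shows "red xs" "red ys"
proof -
  have s: "set xs \<subseteq> S" "set ys \<subseteq> S" using assms by (auto simp: red_def)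
  have "length xs + length ys = len (wp xs \<otimes> wp ys)" using assms s by (simp add: red_def wp_append)
  also have "\<dots> \<le> len (wp xs) + len (wp ys)" using s by (intro len_mult) auto
  finally have "length xs + length ys \<le> len (wp xs) + len (wp ys)" .
  moreover have "len (wp xs) \<le> length xs" "len (wp ys) \<le> length ys" using s len_le by auto
  ultimately show "red xs" "red ys" using s by (auto simp: red_def)
qed

lemma red_Cons: "red (x # xs) \<Longrightarrow> red xs"
  using red_append[of "[x]" xs] by simp

lemma red_ex: "w \<in> carrier W \<Longrightarrow> \<exists>ws. red ws \<and> wp ws = w"
  using len_ex unfolding red_def by metis

definition suf :: "'a \<Rightarrow> 'a \<Rightarrow> bool" where
  "suf c v \<longleftrightarrow> (\<exists>d \<in> carrier W. v = d \<otimes> c \<and> len d + len c = len v)"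

lemma suf_intro: assumes "c \<in> carrier W" "d \<in> carrier W" "v = d \<otimes> c" "len d + len c \<le> len v"
  shows "suf c v"
  using assms len_mult[of d c] unfolding suf_def by force

end

locale cox = cox0 +
  assumes parity: "s \<in> S \<Longrightarrow> w \<in> carrier W \<Longrightarrow> len (s \<otimes> w) \<noteq> len w"
    and exch: "red ws \<Longrightarrow> s \<in> S \<Longrightarrow> len (s \<otimes> wp ws) < len (wp ws) \<Longrightarrow>
        \<exists>i < length ws. s \<otimes> wp ws = wp (take i ws @ drop (Suc i) ws)"
begin

lemma len_cases: assumes "s \<in> S" "w \<in> carrier W"
  shows "len (s \<otimes> w) = Suc (len w) \<or> len w = Suc (len (s \<otimes> w))"
  using len_Sm[OF assms] parity[OF assms] by linarith

lemma red_sub: "set ws \<subseteq> S \<Longrightarrow> \<exists>ws'. set ws' \<subseteq> set ws \<and> red ws' \<and> wp ws' = wp ws"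
proof (induction ws)
  case Nil then show ?case by (auto simp: red_def)
next
  case (Cons x ws)
  then obtain ws' where ws': "set ws' \<subseteq> set ws" "red ws'" "wp ws' = wp ws" by auto
  have x: "x \<in> S" and sw: "set ws \<subseteq> S" using Cons by auto
  have sw': "set ws' \<subseteq> S" using ws' sw by auto
  show ?case
  proof (cases "len (x \<otimes> wp ws') = Suc (len (wp ws'))")
    case True
    then have "red (x # ws')" using ws' x sw' by (auto simp: red_def)
    then show ?thesis using ws' by (intro exI[of _ "x # ws'"]) auto
  next
    case False
    then have "len (x \<otimes> wp ws') < len (wp ws')" using len_cases[of x "wp ws'"] x sw' by auto
    from exch[OF ws'(2) x this] obtain i where i: "i < length ws'"
      "x \<otimes> wp ws' = wp (take i ws' @ drop (Suc i) ws')" by blast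
    let ?v = "take i ws' @ drop (Suc i) ws'"
    have sv: "set ?v \<subseteq> set ws'" using set_take_subset set_drop_subset by fastforce
    have "length ?v = length ws' - 1" using i by simp
    also have "\<dots> = len (wp ws') - 1" using ws'(2) by (simp add: red_def)
    also have "\<dots> = len (wp ?v)" using len_cases[of x "wp ws'"] x sw' False i by auto
    finally have "red ?v" using sv sw' by (auto simp: red_def)
    then show ?thesis using i ws' sv by (intro exI[of _ ?v]) auto
  qed
qed

lemma mcl:
  assumes s: "s \<in> S" and t: "t \<in> S" and c: "c \<in> carrier W"
    and as: "len c < len (s \<otimes> c)" and at: "len c < len (t \<otimes> c)"
    and ws: "set ws \<subseteq> {s, t}"
  shows "len c \<le> len (wp ws \<otimes> c)"
proof -
  define J where "J = {s, t}"
  have JS: "J \<subseteq> S" using s t by (auto simp: J_def)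
  obtain ws0 where ws0: "set ws0 \<subseteq> J"
    and mn: "\<And>ws. set ws \<subseteq> J \<Longrightarrow> len (wp ws0 \<otimes> c) \<le> len (wp ws \<otimes> c)"
    using ex_has_least_nat[of "\<lambda>ws. set ws \<subseteq> J" "[]" "\<lambda>ws. len (wp ws \<otimes> c)"] by auto
  define cs where "cs = wp ws0 \<otimes> c"
  have ws0S: "set ws0 \<subseteq> S" using ws0 JS by auto
  have csc: "cs \<in> carrier W" using ws0S c by (simp add: cs_def)
  have claim: "red us \<Longrightarrow> set us \<subseteq> J \<Longrightarrow> len (wp us \<otimes> cs) = length us + len cs" for us
  proof (induction us)
    case Nil then show ?case using csc by simp
  next
    case (Cons x us)
    have x: "x \<in> S" and usJ: "set us \<subseteq> J" using Cons.prems JS by auto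
    have usS: "set us \<subseteq> S" using usJ JS by auto
    have rus: "red us" using red_Cons Cons.prems by blast
    have IH: "len (wp us \<otimes> cs) = length us + len cs" using Cons.IH rus usJ by blast
    define z where "z = wp us \<otimes> cs"
    have zc: "z \<in> carrier W" using usS csc by (simp add: z_def)
    have eq: "wp (x # us) \<otimes> cs = x \<otimes> z" using x usS csc by (simp add: z_def m_assoc S_car)
    show ?case
    proof (cases "len (x \<otimes> z) = Suc (len z)")
      case True then show ?thesis using eq IH z_def by simp
    next
      case False
      then have lt: "len (x \<otimes> z) < len z" using len_cases[OF x zc] by auto
      obtain rc where rc: "red rc" "wp rc = cs" using red_ex csc by blast
      have rcS: "set rc \<subseteq> S" using rc by (simp add: red_def)
      define L where "L = us @ rc"
      have LS: "set L \<subseteq> S" using usS rcS by (simp add: L_def)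
      have wpL: "wp L = z" using usS rcS rc by (simp add: L_def wp_append z_def)
      have rL: "red L" using LS wpL IH rc rus by (simp add: red_def L_def z_def)
      from exch[OF rL x] lt wpL obtain i where i: "i < length L"
        and ex: "x \<otimes> z = wp (take i L @ drop (Suc i) L)" by auto
      show ?thesis
      proof (cases "i < length us")
        case True
        let ?v = "take i us @ drop (Suc i) us"
        have vS: "set ?v \<subseteq> S" using usS set_take_subset set_drop_subset by fastforce
        have t1: "set (take i us) \<subseteq> S" "set (drop (Suc i) us) \<subseteq> S"
          using usS set_take_subset set_drop_subset by fastforce+
        have "x \<otimes> z = wp ?v \<otimes> cs" using ex True usS rcS rc vS t1 csc
          by (simp add: L_def wp_append m_assoc)
        then have "x \<otimes> wp us \<otimes> cs = wp ?v \<otimes> cs" using x usS csc by (simp add: z_def m_assoc S_car)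
        then have "x \<otimes> wp us = wp ?v" using x usS csc vS S_car by (metis m_closed right_cancel wp_closed)
        then have "len (wp (x # us)) \<le> length ?v" using len_le[OF vS] by simp
        also have "\<dots> < length (x # us)" using True by simp
        finally show ?thesis using Cons.prems by (simp add: red_def)
      next
        case False
        define j where "j = i - length us"
        let ?v = "take j rc @ drop (Suc j) rc"
        have j: "j < length rc" using i False by (simp add: L_def j_def)
        have vS: "set ?v \<subseteq> S" using rcS set_take_subset set_drop_subset by fastforce
        have "take i L @ drop (Suc i) L = us @ ?v" using False by (simp add: L_def j_def Suc_diff_le)
        then have "x \<otimes> z = wp us \<otimes> wp ?v" using ex usS vS by (simp add: wp_append)
        then have "inv (wp us) \<otimes> (x \<otimes> z) = wp ?v" using usS vS
          by (simp add: m_assoc[symmetric])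
        then have e2: "wp (rev us @ [x] @ us @ ws0) \<otimes> c = wp ?v"
          using usS x ws0S c by (simp add: wp_append wp_rev[symmetric] z_def cs_def m_assoc S_car)
        have "len cs \<le> len (wp (rev us @ [x] @ us @ ws0) \<otimes> c)"
          unfolding cs_def using usJ ws0 Cons.prems by (intro mn) auto
        also have "\<dots> \<le> length ?v" using e2 len_le[OF vS] by simp
        also have "\<dots> < length rc" using j by simp
        finally show ?thesis using rc by (simp add: red_def)
      qed
    qed
  qed
  have wr: "set (rev ws0) \<subseteq> S" using ws0S by simp
  obtain ws1 where ws1: "set ws1 \<subseteq> set (rev ws0)" "red ws1" "wp ws1 = wp (rev ws0)"
    using red_sub[OF wr] by blast
  have ws1J: "set ws1 \<subseteq> J" using ws1 ws0 by auto
  have ws1S: "set ws1 \<subseteq> S" using ws1J JS by auto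
  have cc: "c = wp ws1 \<otimes> cs" using ws1 ws0S c
    by (simp add: cs_def wp_rev[symmetric] m_assoc[symmetric])
  have "ws1 = []"
  proof (rule ccontr)
    assume "ws1 \<noteq> []"
    then obtain x ws1' where xw: "ws1 = x # ws1'" by (cases ws1) auto
    have x: "x \<in> J" "x \<in> S" using xw ws1J JS by auto
    have r1: "red ws1'" using ws1 xw red_Cons by blast
    have l1: "len c = length ws1 + len cs" using claim[OF ws1(2) ws1J] cc by metis
    have "x \<otimes> c = wp ws1' \<otimes> cs" using cc xw x ws1S csc
      by (simp add: m_assoc[symmetric] S_sq S_car)
    moreover have "set ws1' \<subseteq> J" using ws1J xw by auto
    ultimately have "len (x \<otimes> c) = length ws1' + len cs" using claim r1 by metis
    then have "len (x \<otimes> c) < len c" using l1 xw by simp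
    then show False using x as at by (auto simp: J_def)
  qed
  then have "c = cs" using cc csc by simp
  then show ?thesis using mn[of ws] ws by (simp add: J_def cs_def)
qed

lemma alt_S: "p \<in> S \<Longrightarrow> q \<in> S \<Longrightarrow> set (alt p q n) \<subseteq> S"
  using alt_set[of p q n] by auto

lemma braid_len:
  assumes p: "p \<in> S" and q: "q \<in> S" and r: "red (alt p q k)" and m: "1 \<le> m" "m \<le> k"
    and br: "wp (alt q p m) = wp (alt p q m)"
  shows "m = k"
proof (rule ccontr)
  assume "m \<noteq> k"
  then have mk: "Suc m \<le> k" using m by simp
  have "alt p q k = alt p q (Suc m) @ drop (Suc m) (alt p q k)"
    using alt_take[OF mk, of p q] by (metis append_take_drop_id)
  then have r2: "red (alt p q (Suc m))" using r red_append by metis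
  obtain m' where m': "m = Suc m'" using m by (cases m) auto
  have "wp (alt p q (Suc m)) = p \<otimes> wp (alt q p m)" by simp
  also have "\<dots> = p \<otimes> (p \<otimes> wp (alt q p m'))" using br m' by simp
  also have "\<dots> = wp (alt q p m')" using p q alt_S[of q p m'] S_car S_sq[OF p]
    by (simp add: m_assoc[symmetric])
  finally have "len (wp (alt p q (Suc m))) \<le> m'" using len_le[OF alt_S[OF q p, of m']] by simp
  then show False using r2 m' by (simp add: red_def)
qed

lemma dihedral:
  assumes p: "p \<in> S" and q: "q \<in> S" and r: "red (alt p q k)" and i: "i < k"
    and e: "q \<otimes> wp (alt p q k) = wp (take i (alt p q k) @ drop (Suc i) (alt p q k))"
  shows "wp (alt p q k) = wp (alt q p k)"
proof -
  define z where "z = (if even i then p else q)"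
  define z' where "z' = (if even i then q else p)"
  define rr where "rr = k - Suc i"
  have zS: "z \<in> S" "z' \<in> S" using p q by (auto simp: z_def z'_def)
  have tk: "take i (alt p q k) = alt p q i" using i alt_take[of i k p q] by simp
  have dk: "drop (Suc i) (alt p q k) = alt z' z rr" using i alt_drop[of "Suc i" k p q]
    by (simp add: z_def z'_def rr_def)
  have ki: "k = i + Suc rr" using i by (simp add: rr_def)
  have ak: "alt p q k = alt p q i @ (z # alt z' z rr)"
    unfolding ki alt_add by (simp add: z_def z'_def)
  have S1: "set (alt p q i) \<subseteq> S" "set (alt z' z rr) \<subseteq> S" "set (alt q p (Suc i)) \<subseteq> S"
    using alt_S p q zS by auto
  define P where "P = wp (alt p q i)"
  define R where "R = wp (alt z' z rr)"
  have PR: "P \<in> carrier W" "R \<in> carrier W" using S1 by (auto simp: P_def R_def)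
  have "q \<otimes> (P \<otimes> (z \<otimes> R)) = P \<otimes> R"
    using e ak tk dk S1 zS by (simp add: wp_append P_def R_def)
  then have "(q \<otimes> P \<otimes> z) \<otimes> R = P \<otimes> R"
    using PR zS q S_car by (simp add: m_assoc)
  then have e1: "q \<otimes> P \<otimes> z = P" using PR zS q S_car by (metis m_closed right_cancel)
  have "wp (alt q p (Suc i)) = q \<otimes> P" by (simp add: P_def)
  also have "\<dots> = q \<otimes> P \<otimes> z \<otimes> z" using PR zS q S_car S_sq[of z] by (simp add: m_assoc)
  also have "\<dots> = P \<otimes> z" using e1 by simp
  also have "\<dots> = wp (alt p q (Suc i))" using alt_snoc[of p q i] S1 zS PR S_car
    by (simp add: wp_append P_def z_def)
  finally have br: "wp (alt q p (Suc i)) = wp (alt p q (Suc i))" .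
  have "Suc i = k" using braid_len[OF p q r _ _ br] i by simp
  then show ?thesis using br by simp
qed

lemma crux:
  assumes v0: "v0 \<in> carrier W" and mx: "\<And>w. w \<in> carrier W \<Longrightarrow> len w \<le> len v0"
  shows "suf c v0 \<Longrightarrow> c \<in> carrier W \<Longrightarrow> s \<in> S \<Longrightarrow> len c < len (s \<otimes> c) \<Longrightarrow> suf (s \<otimes> c) v0"
proof (induction "len v0 - len c" arbitrary: c s rule: less_induct)
  case less
  note sc = less.prems(1) and c = less.prems(2) and s = less.prems(3) and asc = less.prems(4)
  obtain d where d: "d \<in> carrier W" "v0 = d \<otimes> c" "len d + len c = len v0"
    using sc unfolding suf_def by blast
  show ?case
  proof (cases "d = \<one>")
    case True
    then have "c = v0" using d c by simp
    then show ?thesis using mx[of "s \<otimes> c"] asc s c S_car by fastforce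
  next
    case False
    obtain rd where rd: "red rd" "wp rd = d" using red_ex d by blast
    have "rd \<noteq> []" using rd False by auto
    then obtain rd' t where rdt: "rd = rd' @ [t]" by (cases rd rule: rev_cases) auto
    have rdS: "set rd' \<subseteq> S" "t \<in> S" using rd rdt by (auto simp: red_def)
    have rd': "red rd'" using rd rdt red_append by blast
    have dd: "d = wp rd' \<otimes> t" using rd rdt rdS S_car by (simp add: wp_append)
    have ld: "len d = Suc (length rd')" using rd rdt by (simp add: red_def)
    have lrd: "len (wp rd') = length rd'" using rd' by (simp add: red_def)
    define tc where "tc = t \<otimes> c"
    have tcc: "tc \<in> carrier W" using rdS c S_car by (simp add: tc_def)
    have v0e: "v0 = wp rd' \<otimes> tc" using d dd rdS c S_car by (simp add: tc_def m_assoc)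
    have l1: "len tc \<le> Suc (len c)" using len_Sm rdS c by (simp add: tc_def)
    have sufc: "suf tc v0" using suf_intro[OF tcc _ v0e] rdS l1 lrd ld d by simp
    have l2: "len v0 \<le> len (wp rd') + len tc" using v0e len_mult rdS tcc by simp
    have ltc: "len tc = Suc (len c)" using l1 l2 lrd ld d by simp
    show ?thesis
    proof (cases "t = s")
      case True then show ?thesis using sufc by (simp add: tc_def)
    next
      case False
      have tS: "t \<in> S" using rdS by simp
      define P where "P k = (if even k then s else t)" for k :: nat
      define Q where "Q k = (if even k then t else s)" for k :: nat
      have PQS: "P k \<in> S" "Q k \<in> S" for k using s tS by (auto simp: P_def Q_def)
      have altS: "set (alt (P k) (Q k) n) \<subseteq> S" for k n using alt_S PQS by blast
      have altJ: "set (alt (P k) (Q k) n) \<subseteq> {s, t}" for k n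
        using alt_set[of "P k" "Q k" n] by (auto simp: P_def Q_def split: if_splits)
      define A where "A k = wp (alt (P k) (Q k) k) \<otimes> c" for k
      have Ac: "A k \<in> carrier W" for k using altS c by (simp add: A_def)
      define Good where "Good k \<longleftrightarrow> suf (A k) v0 \<and> len (A k) = len c + k" for k
      have G1: "Good 1" using sufc ltc tS c S_car by (simp add: Good_def A_def P_def Q_def tc_def)
      have Gb: "Good k \<Longrightarrow> k \<le> len v0" for k using mx[OF Ac[of k]] by (simp add: Good_def)
      define K where "K = Max {k. Good k}"
      have "{k. Good k} \<subseteq> {..len v0}" using Gb by blast
      then have fin: "finite {k. Good k}" using finite_subset by blast
      have GK: "Good K" using fin G1 unfolding K_def by (metis (mono_tags) Max_in empty_iff mem_Collect_eq)
      have Kmax: "Good k \<Longrightarrow> k \<le> K" for k using fin unfolding K_def by simp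
      have K1: "1 \<le> K" using Kmax G1 by simp
      have AS: "A (Suc K) = Q K \<otimes> A K"
        using alt_S[OF s tS, of K] alt_S[OF tS s, of K] s tS c S_car
        by (cases "even K") (simp_all add: A_def P_def Q_def m_assoc)
      have lAK: "len (A K) = len c + K" using GK by (simp add: Good_def)
      have desc: "len (Q K \<otimes> A K) < len (A K)"
      proof (rule ccontr)
        assume "\<not> ?thesis"
        then have up: "len (Q K \<otimes> A K) = Suc (len (A K))" using len_cases[OF PQS(2)[of K] Ac[of K]] by auto
        have "len v0 - len (A K) < len v0 - len c" using lAK K1 mx[OF Ac[of K]] by simp
        then have "suf (Q K \<otimes> A K) v0" using less.hyps GK Ac PQS up by (auto simp: Good_def)
        then have "Good (Suc K)" using AS up lAK by (simp add: Good_def)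
        then show False using Kmax by fastforce
      qed
      obtain rc where rc: "red rc" "wp rc = c" using red_ex c by blast
      have rcS: "set rc \<subseteq> S" using rc by (simp add: red_def)
      define al where "al = alt (P K) (Q K) K"
      have alS: "set al \<subseteq> S" using altS by (simp add: al_def)
      define L where "L = al @ rc"
      have LS: "set L \<subseteq> S" using alS rcS by (simp add: L_def)
      have wpL: "wp L = A K" using alS rcS rc by (simp add: L_def wp_append A_def al_def)
      have rL: "red L" using LS wpL lAK rc by (simp add: red_def L_def al_def)
      have ral: "red al" using rL red_append L_def by blast
      from exch[OF rL PQS(2)[of K]] desc wpL obtain i where i: "i < length L"
        and ex: "Q K \<otimes> A K = wp (take i L @ drop (Suc i) L)" by auto
      have AKe: "A K = wp al \<otimes> c" by (simp add: A_def al_def)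
      show ?thesis
      proof (cases "i < K")
        case True
        have t1: "set (take i al) \<subseteq> S" "set (drop (Suc i) al) \<subseteq> S"
          using alS set_take_subset set_drop_subset by fastforce+
        have "Q K \<otimes> wp al \<otimes> c = wp (take i al @ drop (Suc i) al) \<otimes> c"
          using ex True alS rcS rc t1 c PQS S_car by (simp add: L_def al_def wp_append m_assoc A_def)
        then have "Q K \<otimes> wp al = wp (take i al @ drop (Suc i) al)"
          using t1 alS c PQS S_car by (metis m_closed right_cancel wp_closed set_append Un_subset_iff)
        then have br: "wp al = wp (alt (Q K) (P K) K)"
          using dihedral[OF PQS(1) PQS(2) _ True] ral by (simp add: al_def)
        obtain n where Kn: "K = Suc n" using K1 by (cases K) auto
        define pre where "pre = alt (Q K) (P K) n"
        have preS: "set pre \<subseteq> S" using alt_S PQS by (simp add: pre_def)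
        have snoc: "alt (Q K) (P K) K = pre @ [s]"
          using alt_snoc[of "Q K" "P K" n] Kn by (simp add: pre_def P_def Q_def)
        have AK2: "A K = wp pre \<otimes> (s \<otimes> c)"
          using AKe br snoc preS s c S_car by (simp add: wp_append m_assoc)
        obtain d' where d': "d' \<in> carrier W" "v0 = d' \<otimes> A K" "len d' + len (A K) = len v0"
          using GK unfolding Good_def suf_def by blast
        have lpre: "len (wp pre) \<le> n" using len_le[OF preS] by (simp add: pre_def)
        have "len (d' \<otimes> wp pre) \<le> len d' + n" using len_mult[of d' "wp pre"] d' preS lpre by simp
        moreover have "len (s \<otimes> c) \<le> Suc (len c)" using len_Sm s c by simp
        ultimately show ?thesis
          using d' AK2 lAK Kn preS s c S_car
          by (intro suf_intro[of _ "d' \<otimes> wp pre"]) (auto simp: m_assoc)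
      next
        case False
        define j where "j = i - K"
        let ?v = "take j rc @ drop (Suc j) rc"
        have j: "j < length rc" using i False by (simp add: L_def j_def al_def)
        have vS: "set ?v \<subseteq> S" using rcS set_take_subset set_drop_subset by fastforce
        have "take i L @ drop (Suc i) L = al @ ?v" using False
          by (simp add: L_def j_def Suc_diff_le al_def)
        then have "Q K \<otimes> (wp al \<otimes> c) = wp al \<otimes> wp ?v" using ex AKe alS vS by (simp add: wp_append)
        then have "inv (wp al) \<otimes> (Q K \<otimes> (wp al \<otimes> c)) = wp ?v" using alS vS
          by (simp add: m_assoc[symmetric])
        then have e2: "wp (rev al @ [Q K] @ al) \<otimes> c = wp ?v"
          using alS PQS c S_car by (simp add: wp_append wp_rev[symmetric] m_assoc)
        have J: "set (rev al @ [Q K] @ al) \<subseteq> {s, t}" using altJ by (auto simp: al_def Q_def)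
        have "len c \<le> len (wp (rev al @ [Q K] @ al) \<otimes> c)"
          using mcl[OF s tS c asc _ J] ltc by (simp add: tc_def)
        also have "\<dots> \<le> length ?v" using e2 len_le[OF vS] by simp
        also have "\<dots> < length rc" using j by simp
        finally show ?thesis using rc by (simp add: red_def)
      qed
    qed
  qed
qed

lemma all_suf:
  assumes v0: "v0 \<in> carrier W" and mx: "\<And>w. w \<in> carrier W \<Longrightarrow> len w \<le> len v0"
  shows "c \<in> carrier W \<Longrightarrow> suf c v0"
proof (induction "len c" arbitrary: c)
  case 0
  then have "c = \<one>" using len_zero by simp
  then show ?case using v0 by (intro suf_intro[of _ v0]) auto
next
  case (Suc n)
  obtain ws where ws: "red ws" "wp ws = c" using red_ex Suc.prems by blast
  then obtain x ws' where xw: "ws = x # ws'" using Suc.hyps by (cases ws) (auto simp: red_def)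
  have x: "x \<in> S" "set ws' \<subseteq> S" using ws xw by (auto simp: red_def)
  have r': "red ws'" using ws xw red_Cons by blast
  have ln: "len (wp ws') = n" using r' ws xw Suc.hyps by (simp add: red_def)
  have "suf (wp ws') v0" using Suc.hyps ln x by auto
  then show ?case using crux[OF v0 mx, of "wp ws'" x] ln Suc.hyps ws xw x by simp
qed

lemma desc_chain:
  assumes v0: "v0 \<in> carrier W" and mx: "\<And>w. w \<in> carrier W \<Longrightarrow> len w \<le> len v0"
    and P0: "P v0"
    and step: "\<And>a s. a \<in> carrier W \<Longrightarrow> s \<in> S \<Longrightarrow> P a \<Longrightarrow> len (s \<otimes> a) < len a \<Longrightarrow> P (s \<otimes> a)"
    and c: "c \<in> carrier W"
  shows "P c"
proof -
  have gen: "\<And>v. v \<in> carrier W \<Longrightarrow> P v \<Longrightarrow> v = wp ds \<otimes> c \<Longrightarrow> set ds \<subseteq> S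
      \<Longrightarrow> length ds + len c = len v \<Longrightarrow> P c" for ds
  proof (induction ds)
    case Nil then show ?case using c by simp
  next
    case (Cons x ds)
    have x: "x \<in> S" "set ds \<subseteq> S" using Cons.prems by auto
    have e: "x \<otimes> v = wp ds \<otimes> c"
      using Cons.prems x c S_car S_sq[of x] by (simp add: m_assoc[symmetric])
    have "len (x \<otimes> v) \<le> length ds + len c" using e len_mult[of "wp ds" c] len_le[OF x(2)] x c by simp
    then have lt: "len (x \<otimes> v) < len v" using Cons.prems by simp
    have Px: "P (x \<otimes> v)" using step[OF Cons.prems(1) x(1) Cons.prems(2) lt] .
    have "len v \<le> Suc (len (x \<otimes> v))" using len_Sm x Cons.prems by simp
    then have "length ds + len c = len (x \<otimes> v)"
      using \<open>len (x \<otimes> v) \<le> length ds + len c\<close> Cons.prems by simp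
    then show ?case using Cons.IH[OF _ Px e x(2)] x Cons.prems S_car by simp
  qed
  obtain d where d: "d \<in> carrier W" "v0 = d \<otimes> c" "len d + len c = len v0"
    using all_suf[OF v0 mx c] unfolding suf_def by blast
  obtain ds where ds: "red ds" "wp ds = d" using red_ex d by blast
  show ?thesis using gen[OF v0 P0, of ds] ds d by (simp add: red_def)
qed

end

lemma r_coset_upd: "A #>\<^bsub>M\<lparr>carrier := Y\<rparr>\<^esub> a = A #>\<^bsub>M\<^esub> a"
  by (simp add: r_coset_def)
lemma set_mult_upd: "A <#>\<^bsub>M\<lparr>carrier := Y\<rparr>\<^esub> C = A <#>\<^bsub>M\<^esub> C"
  by (simp add: set_mult_def)

lemma (in group) inv_cancel1[simp]: "x \<in> carrier G \<Longrightarrow> y \<in> carrier G \<Longrightarrow> inv x \<otimes> (x \<otimes> y) = y"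
  by (simp add: m_assoc[symmetric])
lemma (in group) inv_cancel2[simp]: "x \<in> carrier G \<Longrightarrow> y \<in> carrier G \<Longrightarrow> x \<otimes> (inv x \<otimes> y) = y"
  by (simp add: m_assoc[symmetric])

locale bn = group G for G (structure) +
  fixes B N H :: "'a set" and S :: "'a set set"
  assumes subB: "subgroup B G" and subN: "subgroup N G" and HBN: "H = B \<inter> N"
    and nH: "normal H (G\<lparr>carrier := N\<rparr>)"
    and SW: "S \<subseteq> weyl_group G H N"
    and Sne: "s \<in> S \<Longrightarrow> s \<noteq> H" and Ssq: "s \<in> S \<Longrightarrow> s <#> s = H"
    and Sgen: "w \<in> weyl_group G H N \<Longrightarrow> \<exists>ws. set ws \<subseteq> S \<and> coset_word_prod G H ws = w"
    and ax4: "s \<in> S \<Longrightarrow> ns \<in> s \<Longrightarrow> (ns <# B) #> ns \<noteq> B"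
    and ax5: "s \<in> S \<Longrightarrow> ns \<in> s \<Longrightarrow> n \<in> N \<Longrightarrow>
       (ns <# B) #> n \<subseteq> ((B #> n) <#> B) \<union> ((B #> (ns \<otimes> n)) <#> B)"
begin

abbreviation "W \<equiv> (G\<lparr>carrier := N\<rparr>) Mod H"

lemma subH: "subgroup H G" unfolding HBN by (rule subgroups_Inter_pair[OF subB subN])
lemma HB: "H \<subseteq> B" unfolding HBN by (rule Int_lower1)
lemma HN: "H \<subseteq> N" unfolding HBN by (rule Int_lower2)
lemma Bc: "x \<in> B \<Longrightarrow> x \<in> carrier G" by (rule subgroup.mem_carrier[OF subB])
lemma Nc: "x \<in> N \<Longrightarrow> x \<in> carrier G" by (rule subgroup.mem_carrier[OF subN])
lemma Hc: "x \<in> H \<Longrightarrow> x \<in> carrier G" by (rule subgroup.mem_carrier[OF subH])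
lemma Bm: "x \<in> B \<Longrightarrow> y \<in> B \<Longrightarrow> x \<otimes> y \<in> B" by (rule subgroup.m_closed[OF subB])
lemma Nm: "x \<in> N \<Longrightarrow> y \<in> N \<Longrightarrow> x \<otimes> y \<in> N" by (rule subgroup.m_closed[OF subN])
lemma Hm: "x \<in> H \<Longrightarrow> y \<in> H \<Longrightarrow> x \<otimes> y \<in> H" by (rule subgroup.m_closed[OF subH])
lemma Bi: "x \<in> B \<Longrightarrow> inv x \<in> B" by (rule subgroup.m_inv_closed[OF subB])
lemma Ni: "x \<in> N \<Longrightarrow> inv x \<in> N" by (rule subgroup.m_inv_closed[OF subN])
lemma Hi: "x \<in> H \<Longrightarrow> inv x \<in> H" by (rule subgroup.m_inv_closed[OF subH])
lemma B1: "\<one> \<in> B" by (rule subgroup.one_closed[OF subB])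
lemma N1: "\<one> \<in> N" by (rule subgroup.one_closed[OF subN])

lemma grpW: "group W" using normal.factorgroup_is_group[OF nH] .

lemma carW: "carrier W = weyl_group G H N"
  by (auto simp: FactGroup_def RCOSETS_def weyl_group_def r_coset_upd)

lemma multW: "x \<otimes>\<^bsub>W\<^esub> y = x <#> y"
  by (simp add: FactGroup_def set_mult_upd)
lemma oneW[simp]: "\<one>\<^bsub>W\<^esub> = H"
  by (simp add: FactGroup_def)

lemma cos_mult: "a \<in> N \<Longrightarrow> b \<in> N \<Longrightarrow> (H #> a) <#> (H #> b) = H #> (a \<otimes> b)"
  using normal.rcos_sum[OF nH, of a b] by (simp add: r_coset_upd set_mult_upd)

lemma cos_eq: "a \<in> carrier G \<Longrightarrow> b \<in> carrier G \<Longrightarrow> H #> a = H #> b \<longleftrightarrow> a \<otimes> inv b \<in> H"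
  by (metis is_group rcos_self repr_independence subH subgroup.rcos_module)

lemma cos_H: "h \<in> H \<Longrightarrow> H #> h = H"
  using subgroup.rcos_const[OF subH is_group] .

lemma cos_isH: "a \<in> carrier G \<Longrightarrow> H #> a = H \<Longrightarrow> a \<in> H"
  using rcos_self[OF _ subH] by blast

lemma cosW: "a \<in> N \<Longrightarrow> H #> a \<in> carrier W"
  by (auto simp: carW weyl_group_def)

lemma W_rep: "w \<in> carrier W \<Longrightarrow> \<exists>a\<in>N. w = H #> a"
  by (auto simp: carW weyl_group_def)

lemma S_rep: assumes "s \<in> S" "ns \<in> s" shows "ns \<in> N" "s = H #> ns"
proof -
  obtain a where a: "a \<in> N" "s = H #> a" using assms SW by (auto simp: weyl_group_def)
  then obtain h where h: "h \<in> H" "ns = h \<otimes> a" using assms by (auto simp: r_coset_def)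
  then show ns: "ns \<in> N" using a HN Nm by blast
  show "s = H #> ns" using a assms repr_independence[OF _ _ subH] Nc by blast
qed

lemma S_ex: "s \<in> S \<Longrightarrow> \<exists>ns. ns \<in> s"
  using SW rcos_self[OF _ subH] Nc by (force simp: weyl_group_def)

lemma wprod_eq: "wprod W ws = coset_word_prod G H ws"
  by (simp add: wprod_def coset_word_prod_def)

lemma wlen_eq: "wlen W S = weyl_length G H S"
  by (simp add: wlen_def weyl_length_def wprod_eq fun_eq_iff)

sublocale C: cox0 W S
proof (intro cox0.intro cox0_axioms.intro grpW)
  show "S \<subseteq> carrier W" using SW carW by simp
  show "\<And>s. s \<in> S \<Longrightarrow> s \<otimes>\<^bsub>W\<^esub> s = \<one>\<^bsub>W\<^esub>" using Ssq by simp
  show "\<And>s. s \<in> S \<Longrightarrow> s \<noteq> \<one>\<^bsub>W\<^esub>" using Sne by simp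
  show "\<And>w. w \<in> carrier W \<Longrightarrow> \<exists>ws. set ws \<subseteq> S \<and> wprod W ws = w"
    using Sgen carW wprod_eq by simp
qed


lemmas W_assoc = C.m_assoc[simplified]
lemmas W_lone = C.l_one[simplified]
lemmas W_rone = C.r_one[simplified]

definition inBB :: "'a \<Rightarrow> 'a \<Rightarrow> bool" where
  "inBB n g \<longleftrightarrow> (\<exists>b1\<in>B. \<exists>b2\<in>B. g = b1 \<otimes> n \<otimes> b2)"

abbreviation L :: "'a \<Rightarrow> nat" where "L a \<equiv> C.len (H #> a)"

lemma inBB_r: "inBB n g \<Longrightarrow> c \<in> B \<Longrightarrow> n \<in> carrier G \<Longrightarrow> inBB n (g \<otimes> c)"
  unfolding inBB_def by (metis Bc Bm m_assoc m_closed)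

lemma inBB_l: "inBB n g \<Longrightarrow> c \<in> B \<Longrightarrow> n \<in> carrier G \<Longrightarrow> inBB n (c \<otimes> g)"
  unfolding inBB_def by (metis Bc Bm m_assoc m_closed)

lemma inBB_sym: assumes "inBB n g" "n \<in> carrier G" shows "inBB g n"
proof -
  obtain b1 b2 where b: "b1 \<in> B" "b2 \<in> B" "g = b1 \<otimes> n \<otimes> b2" using assms unfolding inBB_def by blast
  have "n = inv b1 \<otimes> g \<otimes> inv b2" using b assms Bc by (simp add: m_assoc)
  then show ?thesis unfolding inBB_def using b Bi by blast
qed

lemma inBB_c: "inBB n g \<Longrightarrow> n \<in> carrier G \<Longrightarrow> g \<in> carrier G"
  unfolding inBB_def using Bc by blast

lemma inBB_self: "n \<in> carrier G \<Longrightarrow> inBB n n"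
  unfolding inBB_def using B1 by (intro bexI[of _ \<one>]) auto

lemma ax5e: assumes "s \<in> S" "ns \<in> s" "n \<in> N" "b \<in> B"
  shows "inBB n (ns \<otimes> b \<otimes> n) \<or> inBB (ns \<otimes> n) (ns \<otimes> b \<otimes> n)"
proof -
  have "ns \<otimes> b \<otimes> n \<in> (ns <# B) #> n" using assms by (auto simp: l_coset_def r_coset_def)
  then have "ns \<otimes> b \<otimes> n \<in> ((B #> n) <#> B) \<union> ((B #> (ns \<otimes> n)) <#> B)" using ax5[OF assms(1-3)] by blast
  then show ?thesis unfolding inBB_def set_mult_def r_coset_def by blast
qed

lemma S_N: "s \<in> S \<Longrightarrow> ns \<in> s \<Longrightarrow> ns \<in> N" using S_rep by blast
lemma S_W: "s \<in> S \<Longrightarrow> s \<in> carrier W" using SW carW by auto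

lemma cos_letter: assumes "s \<in> S" "ns \<in> s" "a \<in> N"
  shows "H #> (ns \<otimes> a) = s \<otimes>\<^bsub>W\<^esub> (H #> a)"
  using cos_mult[of ns a] S_rep[OF assms(1,2)] assms by (simp add: multW)

lemma cos_letter_r: assumes "s \<in> S" "ns \<in> s" "a \<in> N"
  shows "H #> (a \<otimes> ns) = (H #> a) \<otimes>\<^bsub>W\<^esub> s"
  using cos_mult[of a ns] S_rep[OF assms(1,2)] assms by (simp add: multW)

lemma not_fix: assumes "s \<in> S" "ns \<in> s" "a \<in> N"
  shows "H #> (ns \<otimes> a) \<noteq> H #> a"
proof
  assume "H #> (ns \<otimes> a) = H #> a"
  then have e: "s \<otimes>\<^bsub>W\<^esub> (H #> a) = H #> a" using cos_letter[OF assms] by simp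
  have "s = \<one>\<^bsub>W\<^esub>" using C.r_cancel_one[OF cosW[OF assms(3)] S_W[OF assms(1)]] e by blast
  then show False using Sne assms by simp
qed

lemma sq_H: assumes "s \<in> S" "ns \<in> s" shows "ns \<otimes> ns \<in> H"
proof -
  have n: "ns \<in> N" using S_N assms by blast
  have "H #> (ns \<otimes> ns) = s <#> s" using cos_mult[OF n n] S_rep[OF assms] by simp
  then have "H #> (ns \<otimes> ns) = H" using Ssq assms by simp
  then show ?thesis using cos_isH n Nc by blast
qed

lemma inv_letter: assumes "s \<in> S" "ns \<in> s" shows "inv ns \<in> s"
proof -
  have n: "ns \<in> N" "ns \<in> carrier G" using S_N assms Nc by auto
  have "inv ns \<otimes> inv ns = inv (ns \<otimes> ns)" using n by (simp add: inv_mult_group)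
  then have "inv ns \<otimes> inv ns \<in> H" using sq_H[OF assms] Hi by simp
  then have "inv ns \<in> H #> ns" using subgroup.rcos_module[OF subH is_group, of ns "inv ns"] n by simp
  then show ?thesis using S_rep[OF assms] by simp
qed

lemma cos_cancel_l: assumes "m \<in> N" "a \<in> N" "b \<in> N" "H #> (m \<otimes> a) = H #> (m \<otimes> b)"
  shows "H #> a = H #> b"
proof -
  have "(H #> m) \<otimes>\<^bsub>W\<^esub> (H #> a) = (H #> m) \<otimes>\<^bsub>W\<^esub> (H #> b)"
    using assms cos_mult by (simp add: multW)
  then have "inv\<^bsub>W\<^esub> (H #> m) \<otimes>\<^bsub>W\<^esub> ((H #> m) \<otimes>\<^bsub>W\<^esub> (H #> a))
     = inv\<^bsub>W\<^esub> (H #> m) \<otimes>\<^bsub>W\<^esub> ((H #> m) \<otimes>\<^bsub>W\<^esub> (H #> b))" by simp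
  moreover have "inv\<^bsub>W\<^esub> (H #> m) \<otimes>\<^bsub>W\<^esub> ((H #> m) \<otimes>\<^bsub>W\<^esub> (H #> a)) = H #> a"
    by (rule C.inv_cancel1) (use assms cosW in auto)
  moreover have "inv\<^bsub>W\<^esub> (H #> m) \<otimes>\<^bsub>W\<^esub> ((H #> m) \<otimes>\<^bsub>W\<^esub> (H #> b)) = H #> b"
    by (rule C.inv_cancel1) (use assms cosW in auto)
  ultimately show ?thesis by simp
qed

lemma L0: "a \<in> N \<Longrightarrow> L a = 0 \<Longrightarrow> a \<in> H"
  using C.len_zero[of "H #> a"] cosW cos_isH Nc by auto

lemma Ldec_l: assumes a: "a \<in> N" and L: "L a \<noteq> 0"
  shows "\<exists>x\<in>S. \<exists>m\<in>x. L (m \<otimes> a) < L a"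
proof -
  obtain ws where ws: "C.red ws" "C.wp ws = H #> a" using C.red_ex cosW[OF a] by blast
  have "ws \<noteq> []" using ws L by (auto simp: C.red_def)
  then obtain x xs where xw: "ws = x # xs" by (cases ws) auto
  have x: "x \<in> S" "set xs \<subseteq> S" using ws xw by (auto simp: C.red_def)
  obtain nx where nx: "nx \<in> x" using S_ex x by blast
  have m: "inv nx \<in> x" using inv_letter[OF x(1) nx] .
  have "H #> (inv nx \<otimes> a) = x \<otimes>\<^bsub>W\<^esub> (x \<otimes>\<^bsub>W\<^esub> C.wp xs)"
    using cos_letter[OF x(1) m a] ws xw by simp
  also have "\<dots> = C.wp xs" using x C.S_car Ssq[of x] W_lone[of "C.wp xs"] C.wp_closed[OF x(2)]
    by (simp add: W_assoc[symmetric])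
  finally have "L (inv nx \<otimes> a) \<le> length xs" using C.len_le[OF x(2)] by simp
  also have "\<dots> < L a" using ws xw by (simp add: C.red_def)
  finally show ?thesis using x m by blast
qed

lemma Ldec_r: assumes a: "a \<in> N" and L: "L a \<noteq> 0"
  shows "\<exists>y\<in>S. \<exists>m\<in>y. L (a \<otimes> m) < L a"
proof -
  obtain ws where ws: "C.red ws" "C.wp ws = H #> a" using C.red_ex cosW[OF a] by blast
  have "ws \<noteq> []" using ws L by (auto simp: C.red_def)
  then obtain y xs where xw: "ws = xs @ [y]" by (cases ws rule: rev_cases) auto
  have y: "y \<in> S" "set xs \<subseteq> S" using ws xw by (auto simp: C.red_def)
  obtain ny where ny: "ny \<in> y" using S_ex y by blast
  have "H #> (a \<otimes> ny) = (C.wp xs \<otimes>\<^bsub>W\<^esub> y) \<otimes>\<^bsub>W\<^esub> y"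
    using cos_letter_r[OF y(1) ny a] ws xw y C.S_car W_rone[of y] by (simp add: C.wp_append)
  also have "\<dots> = C.wp xs" using y C.S_car Ssq[of y] W_rone[of "C.wp xs"] C.wp_closed[OF y(2)]
    by (simp add: W_assoc)
  finally have "L (a \<otimes> ny) \<le> length xs" using C.len_le[OF y(2)] by simp
  also have "\<dots> < L a" using ws xw by (simp add: C.red_def)
  finally show ?thesis using y ny by blast
qed

lemma L_left: assumes "s \<in> S" "ns \<in> s" "a \<in> N"
  shows "L (ns \<otimes> a) \<le> Suc (L a)" "L a \<le> Suc (L (ns \<otimes> a))"
  using C.len_Sm[OF assms(1) cosW[OF assms(3)]] cos_letter[OF assms] by auto

lemma L_right: assumes "s \<in> S" "ns \<in> s" "a \<in> N"
  shows "L (a \<otimes> ns) \<le> Suc (L a)"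
  using C.len_mult[OF cosW[OF assms(3)] S_W[OF assms(1)]] cos_letter_r[OF assms] assms by simp



lemma inBB_inv: assumes "inBB n g" "n \<in> carrier G" shows "inBB (inv n) (inv g)"
proof -
  obtain b1 b2 where b: "b1 \<in> B" "b2 \<in> B" "g = b1 \<otimes> n \<otimes> b2" using assms unfolding inBB_def by blast
  have "inv g = inv b2 \<otimes> inv n \<otimes> inv b1" using b assms Bc by (simp add: inv_mult_group m_assoc)
  then show ?thesis unfolding inBB_def using b Bi by blast
qed

lemma inBB_trans: assumes "inBB n g" "inBB n' g" "n \<in> carrier G" "n' \<in> carrier G" shows "inBB n n'"
proof -
  obtain b1 b2 where b: "b1 \<in> B" "b2 \<in> B" "g = b1 \<otimes> n \<otimes> b2" using assms unfolding inBB_def by blast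
  obtain c1 c2 where c: "c1 \<in> B" "c2 \<in> B" "g = c1 \<otimes> n' \<otimes> c2" using assms unfolding inBB_def by blast
  have "n' = (inv c1 \<otimes> b1) \<otimes> n \<otimes> (b2 \<otimes> inv c2)"
  proof -
    have "inv c1 \<otimes> g \<otimes> inv c2 = n'" using c assms Bc by (simp add: m_assoc)
    moreover have "inv c1 \<otimes> g \<otimes> inv c2 = (inv c1 \<otimes> b1) \<otimes> n \<otimes> (b2 \<otimes> inv c2)"
      using b c assms Bc by (simp add: m_assoc)
    ultimately show ?thesis by simp
  qed
  then show ?thesis unfolding inBB_def using b c Bi Bm by blast
qed

lemma inBB_one: "inBB \<one> g \<Longrightarrow> g \<in> B"
  unfolding inBB_def using Bm Bc by auto

lemma BR: "a \<in> N \<Longrightarrow> b \<in> N \<Longrightarrow> inBB b a \<Longrightarrow> H #> a = H #> b"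
proof (induction "L a" arbitrary: a b rule: less_induct)
  case less
  have ac: "a \<in> carrier G" "b \<in> carrier G" using less.prems Nc by auto
  from less.prems(3) obtain b1 b2 where bb: "b1 \<in> B" "b2 \<in> B" "a = b1 \<otimes> b \<otimes> b2"
    by (auto simp: inBB_def)
  show ?case
  proof (cases "L a = 0")
    case True
    then have aH: "a \<in> H" using L0 less.prems by blast
    have "b = inv b1 \<otimes> a \<otimes> inv b2" using bb ac Bc by (simp add: m_assoc)
    moreover have "inv b1 \<otimes> a \<otimes> inv b2 \<in> B"
      by (intro Bm Bi bb(1,2)) (use aH HB in blast)
    ultimately have "b \<in> H" using less.prems HBN by simp
    then show ?thesis using aH cos_H by simp
  next
    case False
    obtain x m where xm: "x \<in> S" "m \<in> x" "L (m \<otimes> a) < L a" using Ldec_l[OF less.prems(1) False] by blast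
    have mN: "m \<in> N" using S_N xm by blast
    have mc: "m \<in> carrier G" using mN Nc by blast
    have ea: "m \<otimes> a = (m \<otimes> b1 \<otimes> b) \<otimes> b2" using bb ac mc Bc by (simp add: m_assoc)
    have ma: "m \<otimes> a \<in> N" using mN less.prems Nm by blast
    have mb: "m \<otimes> b \<in> N" using mN less.prems Nm by blast
    have "inBB b (m \<otimes> b1 \<otimes> b) \<or> inBB (m \<otimes> b) (m \<otimes> b1 \<otimes> b)"
      by (rule ax5e[OF xm(1,2) less.prems(2) bb(1)])
    then have "inBB b (m \<otimes> a) \<or> inBB (m \<otimes> b) (m \<otimes> a)"
      unfolding ea using inBB_r[OF _ bb(2)] ac mc by blast
    then show ?thesis
    proof
      assume h: "inBB b (m \<otimes> a)"
      have e1: "H #> (m \<otimes> a) = H #> b" using less.hyps[OF xm(3) ma less.prems(2) h] .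
      then have "L b < L a" using xm by simp
      moreover have "inBB a b" using inBB_sym[OF less.prems(3)] ac by blast
      ultimately show ?thesis using less.hyps[OF _ less.prems(2) less.prems(1)] by simp
    next
      assume h: "inBB (m \<otimes> b) (m \<otimes> a)"
      have "H #> (m \<otimes> a) = H #> (m \<otimes> b)" using less.hyps[OF xm(3) ma mb h] .
      then show ?thesis using cos_cancel_l mN less.prems by blast
    qed
  qed
qed

lemma RA: assumes m: "m \<in> N" and y: "y \<in> S" "ny \<in> y" and b: "b \<in> B"
  shows "inBB m (m \<otimes> b \<otimes> ny) \<or> inBB (m \<otimes> ny) (m \<otimes> b \<otimes> ny)"
proof -
  have iy: "inv ny \<in> y" using inv_letter y by blast
  have nyc: "ny \<in> carrier G" using S_N y Nc by blast
  have mc: "m \<in> carrier G" using m Nc by blast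
  have bc: "b \<in> carrier G" using b Bc by blast
  have eq: "inv ny \<otimes> inv b \<otimes> inv m = inv (m \<otimes> b \<otimes> ny)" using nyc mc bc
    by (simp add: inv_mult_group m_assoc)
  have eq2: "inv ny \<otimes> inv m = inv (m \<otimes> ny)" using nyc mc by (simp add: inv_mult_group)
  from ax5e[OF y(1) iy Ni[OF m] Bi[OF b]]
  have "inBB (inv m) (inv (m \<otimes> b \<otimes> ny)) \<or> inBB (inv (m \<otimes> ny)) (inv (m \<otimes> b \<otimes> ny))"
    using eq eq2 by simp
  then show ?thesis
  proof
    assume "inBB (inv m) (inv (m \<otimes> b \<otimes> ny))"
    then have "inBB (inv (inv m)) (inv (inv (m \<otimes> b \<otimes> ny)))" using inBB_inv mc by blast
    then show ?thesis using mc bc nyc by simp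
  next
    assume "inBB (inv (m \<otimes> ny)) (inv (m \<otimes> b \<otimes> ny))"
    then have "inBB (inv (inv (m \<otimes> ny))) (inv (inv (m \<otimes> b \<otimes> ny)))" using inBB_inv mc nyc by blast
    then show ?thesis using mc bc nyc by simp
  qed
qed

lemma L1: assumes s: "s \<in> S" "ns \<in> s"
  shows "a \<in> N \<Longrightarrow> L a \<le> L (ns \<otimes> a) \<Longrightarrow> b \<in> B \<Longrightarrow> inBB (ns \<otimes> a) (ns \<otimes> b \<otimes> a)"
proof (induction "L a" arbitrary: a b rule: less_induct)
  case less
  have nsN: "ns \<in> N" using S_N s by blast
  have nsc: "ns \<in> carrier G" using nsN Nc by blast
  have ac: "a \<in> carrier G" using less.prems Nc by blast
  have bc: "b \<in> carrier G" using less.prems Bc by blast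
  show ?case
  proof (cases "L a = 0")
    case True
    then have aH: "a \<in> H" using L0 less.prems by blast
    have aB: "a \<in> B" using aH HB by blast
    have "ns \<otimes> b \<otimes> a = \<one> \<otimes> (ns \<otimes> a) \<otimes> (inv a \<otimes> b \<otimes> a)" using nsc ac bc by (simp add: m_assoc)
    moreover have "inv a \<otimes> b \<otimes> a \<in> B" using aB less.prems Bi Bm by blast
    ultimately show ?thesis unfolding inBB_def using B1 by blast
  next
    case False
    obtain y m where ym: "y \<in> S" "m \<in> y" "L (a \<otimes> m) < L a" using Ldec_r[OF less.prems(1) False] by blast
    define a' where "a' = a \<otimes> m"
    have mN: "m \<in> N" using S_N ym by blast
    have mc: "m \<in> carrier G" using mN Nc by blast
    have a'N: "a' \<in> N" using mN less.prems Nm by (simp add: a'_def)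
    have a'c: "a' \<in> carrier G" using a'N Nc by blast
    have im: "inv m \<in> y" using inv_letter ym by blast
    have aa: "a = a' \<otimes> inv m" using ac mc by (simp add: a'_def m_assoc)
    have la: "L a \<le> Suc (L a')" using L_right[OF ym(1) im a'N] aa by simp
    have lna: "L (ns \<otimes> a) \<le> Suc (L (ns \<otimes> a'))"
      using L_right[OF ym(1) im Nm[OF nsN a'N]] aa nsc a'c mc by (simp add: m_assoc)
    have la'lt: "L a' < L a" using ym by (simp add: a'_def)
    have "L a' \<le> L (ns \<otimes> a')" using la lna less.prems(2) la'lt by linarith
    then have "inBB (ns \<otimes> a') (ns \<otimes> b \<otimes> a')" using less.hyps[OF la'lt a'N _ less.prems(3)] by blast
    then obtain c1 c2 where cc: "c1 \<in> B" "c2 \<in> B" "ns \<otimes> b \<otimes> a' = c1 \<otimes> (ns \<otimes> a') \<otimes> c2"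
      unfolding inBB_def by blast
    have c12: "c1 \<in> carrier G" "c2 \<in> carrier G" using cc Bc by auto
    have nsa'N: "ns \<otimes> a' \<in> N" using nsN a'N Nm by blast
    have e1: "ns \<otimes> b \<otimes> a = c1 \<otimes> ((ns \<otimes> a') \<otimes> c2 \<otimes> inv m)"
    proof -
      have "ns \<otimes> b \<otimes> a = (ns \<otimes> b \<otimes> a') \<otimes> inv m" using aa nsc bc a'c mc by (simp add: m_assoc)
      also have "\<dots> = c1 \<otimes> ((ns \<otimes> a') \<otimes> c2 \<otimes> inv m)" using cc c12 nsc a'c mc by (simp add: m_assoc)
      finally show ?thesis .
    qed
    have nsa: "ns \<otimes> a' \<otimes> inv m = ns \<otimes> a" using aa nsc a'c mc by (simp add: m_assoc)
    have nsac: "ns \<otimes> a' \<in> carrier G" "ns \<otimes> a \<in> carrier G" using nsc a'c ac by auto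
    have "inBB (ns \<otimes> a') ((ns \<otimes> a') \<otimes> c2 \<otimes> inv m) \<or> inBB (ns \<otimes> a) ((ns \<otimes> a') \<otimes> c2 \<otimes> inv m)"
      using RA[OF nsa'N ym(1) im cc(2)] unfolding nsa .
    then have "inBB (ns \<otimes> a') (c1 \<otimes> ((ns \<otimes> a') \<otimes> c2 \<otimes> inv m)) \<or> inBB (ns \<otimes> a) (c1 \<otimes> ((ns \<otimes> a') \<otimes> c2 \<otimes> inv m))"
      using inBB_l[OF _ cc(1)] nsac by blast
    then have "inBB (ns \<otimes> a') (ns \<otimes> b \<otimes> a) \<or> inBB (ns \<otimes> a) (ns \<otimes> b \<otimes> a)"
      unfolding e1 .
    then show ?thesis
    proof
      assume h: "inBB (ns \<otimes> a') (ns \<otimes> b \<otimes> a)"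
      then obtain e1 e2 where ee: "e1 \<in> B" "e2 \<in> B" "ns \<otimes> b \<otimes> a = e1 \<otimes> (ns \<otimes> a') \<otimes> e2"
        unfolding inBB_def by blast
      have e12: "e1 \<in> carrier G" "e2 \<in> carrier G" using ee Bc by auto
      have ins: "inv ns \<in> s" using inv_letter s by blast
      have a'e: "a' = (inv ns \<otimes> inv e1 \<otimes> ns) \<otimes> b \<otimes> a \<otimes> inv e2"
      proof -
        have "inv ns \<otimes> inv e1 \<otimes> (ns \<otimes> b \<otimes> a) \<otimes> inv e2 = a'"
          using ee e12 nsc a'c by (simp add: m_assoc)
        then show ?thesis using e12 nsc bc ac by (simp add: m_assoc)
      qed
      from ax5e[OF s(1) ins nsN Bi[OF ee(1)]]
      have "inBB ns (inv ns \<otimes> inv e1 \<otimes> ns) \<or> inBB \<one> (inv ns \<otimes> inv e1 \<otimes> ns)"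
        using nsc by simp
      then show ?thesis
      proof
        assume "inBB \<one> (inv ns \<otimes> inv e1 \<otimes> ns)"
        then have "inv ns \<otimes> inv e1 \<otimes> ns \<in> B" using inBB_one by blast
        then have "(inv ns \<otimes> inv e1 \<otimes> ns) \<otimes> b \<in> B" using less.prems(3) Bm by blast
        moreover have "a' = ((inv ns \<otimes> inv e1 \<otimes> ns) \<otimes> b) \<otimes> a \<otimes> inv e2" using a'e .
        ultimately have "inBB a a'" unfolding inBB_def using Bi[OF ee(2)] by blast
        then have "H #> a' = H #> a" using BR a'N less.prems(1) by blast
        then show ?thesis using la'lt by simp
      next
        assume "inBB ns (inv ns \<otimes> inv e1 \<otimes> ns)"
        then obtain d1 d2 where dd: "d1 \<in> B" "d2 \<in> B" "inv ns \<otimes> inv e1 \<otimes> ns = d1 \<otimes> ns \<otimes> d2"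
          unfolding inBB_def by blast
        have d12: "d1 \<in> carrier G" "d2 \<in> carrier G" using dd Bc by auto
        have a'e2: "a' = d1 \<otimes> (ns \<otimes> (d2 \<otimes> b) \<otimes> a) \<otimes> inv e2"
          using a'e dd d12 nsc bc ac e12 by (simp add: m_assoc)
        have "inBB a (ns \<otimes> (d2 \<otimes> b) \<otimes> a) \<or> inBB (ns \<otimes> a) (ns \<otimes> (d2 \<otimes> b) \<otimes> a)"
          using ax5e[OF s less.prems(1) Bm[OF dd(2) less.prems(3)]] by blast
        then have "inBB a (d1 \<otimes> (ns \<otimes> (d2 \<otimes> b) \<otimes> a) \<otimes> inv e2) \<or>
                   inBB (ns \<otimes> a) (d1 \<otimes> (ns \<otimes> (d2 \<otimes> b) \<otimes> a) \<otimes> inv e2)"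
          using inBB_l[OF _ dd(1)] inBB_r[OF _ Bi[OF ee(2)]] ac nsc inBB_c by (meson m_closed)
        then have "inBB a a' \<or> inBB (ns \<otimes> a) a'" unfolding a'e2[symmetric] .
        then show ?thesis
        proof
          assume "inBB a a'"
          then have "H #> a' = H #> a" using BR a'N less.prems(1) by blast
          then show ?thesis using la'lt by simp
        next
          assume "inBB (ns \<otimes> a) a'"
          then have "H #> a' = H #> (ns \<otimes> a)" using BR a'N nsN less.prems(1) Nm by blast
          then show ?thesis using la'lt less.prems(2) by simp
        qed
      qed
    qed simp
  qed
qed


lemma nonB: assumes s: "s \<in> S" "ns \<in> s" shows "\<exists>b\<in>B. ns \<otimes> b \<otimes> inv ns \<notin> B"
proof (rule ccontr)
  assume "\<not> ?thesis"
  then have all: "\<And>b. b \<in> B \<Longrightarrow> ns \<otimes> b \<otimes> inv ns \<in> B" by blast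
  have nsc: "ns \<in> carrier G" using S_N s Nc by blast
  have sq: "ns \<otimes> ns \<in> B" using sq_H[OF s] HB by blast
  have sqi: "inv (ns \<otimes> ns) \<in> B" using sq Bi by blast
  have "(ns <# B) #> ns = B"
  proof
    show "(ns <# B) #> ns \<subseteq> B"
    proof
      fix x assume "x \<in> (ns <# B) #> ns"
      then obtain b where b: "b \<in> B" "x = ns \<otimes> b \<otimes> ns" by (auto simp: l_coset_def r_coset_def)
      have "x = (ns \<otimes> b \<otimes> inv ns) \<otimes> (ns \<otimes> ns)" using b nsc Bc by (simp add: m_assoc)
      then show "x \<in> B" using all[OF b(1)] sq Bm by simp
    qed
  next
    show "B \<subseteq> (ns <# B) #> ns"
    proof
      fix x assume x: "x \<in> B"
      have xc: "x \<in> carrier G" using x Bc by blast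
      define h where "h = inv (ns \<otimes> ns)"
      have hc: "h \<in> carrier G" using nsc by (simp add: h_def)
      have y: "inv ns \<otimes> x \<otimes> inv ns = h \<otimes> (ns \<otimes> (x \<otimes> h) \<otimes> inv ns) \<otimes> (ns \<otimes> ns)"
        using nsc xc by (simp add: h_def m_assoc inv_mult_group)
      have hB: "h \<in> B" using sqi by (simp add: h_def)
      have mid: "ns \<otimes> (x \<otimes> h) \<otimes> inv ns \<in> B" using all[OF Bm[OF x hB]] .
      have yB: "inv ns \<otimes> x \<otimes> inv ns \<in> B"
        unfolding y by (rule Bm[OF Bm[OF hB mid] sq])
      have "x = ns \<otimes> (inv ns \<otimes> x \<otimes> inv ns) \<otimes> ns" using nsc xc by (simp add: m_assoc)
      then show "x \<in> (ns <# B) #> ns" using yB by (auto simp: l_coset_def r_coset_def)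
    qed
  qed
  then show False using ax4[OF s] by blast
qed

lemma one_or: assumes "s \<in> S" "ns \<in> s" "b \<in> B" "ns \<otimes> b \<otimes> inv ns \<notin> B"
  shows "inBB (inv ns) (ns \<otimes> b \<otimes> inv ns)"
proof -
  have nsc: "ns \<in> carrier G" using S_N assms Nc by blast
  have "inBB (inv ns) (ns \<otimes> b \<otimes> inv ns) \<or> inBB (ns \<otimes> inv ns) (ns \<otimes> b \<otimes> inv ns)"
    using ax5e[OF assms(1,2) Ni[OF S_N[OF assms(1,2)]] assms(3)] .
  then show ?thesis using inBB_one assms(4) nsc by auto
qed

lemma PAR: assumes s: "s \<in> S" "ns \<in> s" and a: "a \<in> N" shows "L (ns \<otimes> a) \<noteq> L a"
proof
  assume eq: "L (ns \<otimes> a) = L a"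
  have nsN: "ns \<in> N" using S_N s by blast
  have nsc: "ns \<in> carrier G" using nsN Nc by blast
  have ac: "a \<in> carrier G" using a Nc by blast
  have ins: "inv ns \<in> s" using inv_letter s by blast
  have nsaN: "ns \<otimes> a \<in> N" using nsN a Nm by blast
  obtain b0 where b0: "b0 \<in> B" "ns \<otimes> b0 \<otimes> inv ns \<notin> B" using nonB[OF s] by blast
  have b0c: "b0 \<in> carrier G" using b0 Bc by blast
  obtain d1 d2 where dd: "d1 \<in> B" "d2 \<in> B" "ns \<otimes> b0 \<otimes> inv ns = d1 \<otimes> inv ns \<otimes> d2"
    using one_or[OF s b0] unfolding inBB_def by blast
  have d12: "d1 \<in> carrier G" "d2 \<in> carrier G" using dd Bc by auto
  have h1: "inBB (ns \<otimes> a) (ns \<otimes> b0 \<otimes> a)" using L1[OF s a _ b0(1)] eq by simp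
  have "L (ns \<otimes> a) \<le> L (inv ns \<otimes> (ns \<otimes> a))" using eq nsc ac by simp
  then have "inBB (inv ns \<otimes> (ns \<otimes> a)) (inv ns \<otimes> d2 \<otimes> (ns \<otimes> a))"
    using L1[OF s(1) ins nsaN _ dd(2)] by blast
  then have "inBB a (inv ns \<otimes> d2 \<otimes> (ns \<otimes> a))" using nsc ac by simp
  then have "inBB a (d1 \<otimes> (inv ns \<otimes> d2 \<otimes> (ns \<otimes> a)))" using inBB_l dd(1) ac by blast
  moreover have "d1 \<otimes> (inv ns \<otimes> d2 \<otimes> (ns \<otimes> a)) = ns \<otimes> b0 \<otimes> a"
  proof -
    have "ns \<otimes> b0 \<otimes> a = (ns \<otimes> b0 \<otimes> inv ns) \<otimes> (ns \<otimes> a)" using nsc b0c ac by (simp add: m_assoc)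
    also have "\<dots> = d1 \<otimes> (inv ns \<otimes> d2 \<otimes> (ns \<otimes> a))" using dd d12 nsc ac by (simp add: m_assoc)
    finally show ?thesis by simp
  qed
  ultimately have h2: "inBB a (ns \<otimes> b0 \<otimes> a)" by simp
  have "inBB a (ns \<otimes> a)" using inBB_trans[OF h2 h1] ac nsc by blast
  then have "H #> (ns \<otimes> a) = H #> a" using BR nsaN a by blast
  then show False using not_fix[OF s a] by blast
qed

lemma ED: assumes x: "x \<in> B" and a: "a \<in> N" and z: "a \<otimes> x \<otimes> inv a \<in> B"
  and s: "s \<in> S" "ns \<in> s" and lt: "L (ns \<otimes> a) < L a"
  shows "(ns \<otimes> a) \<otimes> x \<otimes> inv (ns \<otimes> a) \<in> B"
proof -
  have nsN: "ns \<in> N" using S_N s by blast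
  have nsc: "ns \<in> carrier G" using nsN Nc by blast
  have ac: "a \<in> carrier G" using a Nc by blast
  have xc: "x \<in> carrier G" using x Bc by blast
  have ins: "inv ns \<in> s" using inv_letter s by blast
  define c where "c = ns \<otimes> a"
  have cN: "c \<in> N" using nsN a Nm by (simp add: c_def)
  have cc: "c \<in> carrier G" using cN Nc by blast
  have eq: "(ns \<otimes> a) \<otimes> x \<otimes> inv (ns \<otimes> a) = ns \<otimes> (a \<otimes> x \<otimes> inv a) \<otimes> inv ns"
    using nsc ac xc by (simp add: m_assoc inv_mult_group)
  show ?thesis
  proof (rule ccontr)
    assume nB: "\<not> ?thesis"
    then have nB': "ns \<otimes> (a \<otimes> x \<otimes> inv a) \<otimes> inv ns \<notin> B" using eq by simp
    obtain d1 d2 where dd: "d1 \<in> B" "d2 \<in> B" "ns \<otimes> (a \<otimes> x \<otimes> inv a) \<otimes> inv ns = d1 \<otimes> inv ns \<otimes> d2"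
      using one_or[OF s z nB'] unfolding inBB_def by blast
    have d12: "d1 \<in> carrier G" "d2 \<in> carrier G" using dd Bc by auto
    have ce: "c = d1 \<otimes> (inv ns \<otimes> d2 \<otimes> c) \<otimes> inv x"
    proof -
      have "c = (ns \<otimes> (a \<otimes> x \<otimes> inv a) \<otimes> inv ns) \<otimes> c \<otimes> inv x"
        using nsc ac xc by (simp add: c_def m_assoc)
      also have "\<dots> = d1 \<otimes> (inv ns \<otimes> d2 \<otimes> c) \<otimes> inv x" using dd d12 nsc cc xc by (simp add: m_assoc)
      finally show ?thesis .
    qed
    have "L c \<le> L (inv ns \<otimes> c)" using lt nsc ac by (simp add: c_def)
    then have "inBB (inv ns \<otimes> c) (inv ns \<otimes> d2 \<otimes> c)" using L1[OF s(1) ins cN _ dd(2)] by blast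
    then have "inBB a (inv ns \<otimes> d2 \<otimes> c)" using nsc ac by (simp add: c_def)
    then have "inBB a (d1 \<otimes> (inv ns \<otimes> d2 \<otimes> c) \<otimes> inv x)"
      using inBB_l[OF _ dd(1)] inBB_r[OF _ Bi[OF x]] ac inBB_c by (meson m_closed)
    then have "inBB a c" using ce by simp
    then have "H #> c = H #> a" using BR cN a by blast
    then show False using not_fix[OF s a] by (simp add: c_def)
  qed
qed


lemma key_desc: assumes s: "s \<in> S" "ns \<in> s" and q: "q \<in> N" and lt: "L (ns \<otimes> q) < L q"
  shows "\<exists>b\<in>B. inBB q (ns \<otimes> b \<otimes> q)"
proof (rule ccontr)
  assume "\<not> ?thesis"
  then have nq: "\<And>b. b \<in> B \<Longrightarrow> \<not> inBB q (ns \<otimes> b \<otimes> q)" by blast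
  have nsN: "ns \<in> N" using S_N s by blast
  have nsc: "ns \<in> carrier G" using nsN Nc by blast
  have qc: "q \<in> carrier G" using q Nc by blast
  have ins: "inv ns \<in> s" using inv_letter s by blast
  have all: "inBB (ns \<otimes> q) (ns \<otimes> b \<otimes> q)" if b: "b \<in> B" for b
    using ax5e[OF s q b] nq[OF b] by blast
  define c' where "c' = ns \<otimes> q"
  have c'N: "c' \<in> N" using nsN q Nm by (simp add: c'_def)
  have iq: "inv ns \<otimes> c' = q" using nsc qc by (simp add: c'_def)
  have "L c' \<le> L (inv ns \<otimes> c')" using lt iq by (simp add: c'_def)
  then have L1': "inBB q (inv ns \<otimes> b \<otimes> c')" if "b \<in> B" for b
    using L1[OF s(1) ins c'N _ that] iq by simp
  obtain b1 where b1: "b1 \<in> B" "inv ns \<otimes> b1 \<otimes> inv (inv ns) \<notin> B" using nonB[OF s(1) ins] by blast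
  have b1c: "b1 \<in> carrier G" using b1 Bc by blast
  obtain d1 d2 where dd: "d1 \<in> B" "d2 \<in> B" "inv ns \<otimes> b1 \<otimes> inv (inv ns) = d1 \<otimes> inv (inv ns) \<otimes> d2"
    using one_or[OF s(1) ins b1] unfolding inBB_def by blast
  have d12: "d1 \<in> carrier G" "d2 \<in> carrier G" using dd Bc by auto
  have e: "inv ns \<otimes> b1 \<otimes> c' = d1 \<otimes> (ns \<otimes> d2 \<otimes> q)"
  proof -
    have "inv ns \<otimes> b1 \<otimes> c' = (inv ns \<otimes> b1 \<otimes> inv (inv ns)) \<otimes> q" using nsc b1c qc by (simp add: c'_def m_assoc)
    also have "\<dots> = d1 \<otimes> (ns \<otimes> d2 \<otimes> q)" using dd d12 nsc qc by (simp add: m_assoc)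
    finally show ?thesis .
  qed
  have "inBB (ns \<otimes> q) (d1 \<otimes> (ns \<otimes> d2 \<otimes> q))" using inBB_l[OF all[OF dd(2)] dd(1)] nsc qc by blast
  then have h1: "inBB (ns \<otimes> q) (inv ns \<otimes> b1 \<otimes> c')" using e by simp
  have h2: "inBB q (inv ns \<otimes> b1 \<otimes> c')" using L1'[OF b1(1)] .
  have "inBB q (ns \<otimes> q)" using inBB_trans[OF h2 h1] nsc qc by blast
  then have "H #> (ns \<otimes> q) = H #> q" using BR Nm[OF nsN q] q by blast
  then show False using not_fix[OF s q] by blast
qed

lemma EXCH: assumes ws: "set ws \<subseteq> S" and s: "s \<in> S"
  and lt: "C.len (s \<otimes>\<^bsub>W\<^esub> C.wp ws) < C.len (C.wp ws)"
  shows "\<exists>i<length ws. s \<otimes>\<^bsub>W\<^esub> C.wp ws = C.wp (take i ws @ drop (Suc i) ws)"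
proof -
  define P where "P j = C.wp (take j ws)" for j
  have PS: "set (take j ws) \<subseteq> S" for j using ws set_take_subset by fastforce
  have Pc: "P j \<in> carrier W" for j using PS by (simp add: P_def)
  define Q where "Q j \<longleftrightarrow> j \<le> length ws \<and> C.len (s \<otimes>\<^bsub>W\<^esub> P j) < C.len (P j)" for j
  have Qex: "Q (length ws)" using lt by (simp add: Q_def P_def)
  define j0 where "j0 = (LEAST j. Q j)"
  have Qj0: "Q j0" using LeastI[of Q, OF Qex] by (simp add: j0_def)
  have nQ: "\<And>j. j < j0 \<Longrightarrow> \<not> Q j" using not_less_Least by (simp add: j0_def)
  have "j0 \<noteq> 0"
  proof
    assume "j0 = 0"
    then have "C.len (s \<otimes>\<^bsub>W\<^esub> \<one>\<^bsub>W\<^esub>) < C.len \<one>\<^bsub>W\<^esub>" using Qj0 by (simp add: Q_def P_def)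
    then show False using W_rone[OF S_W[OF s]] C.len_one by simp
  qed
  then obtain i where i: "j0 = Suc i" by (cases j0) auto
  have il: "i < length ws" using Qj0 i by (simp add: Q_def)
  have nQi: "\<not> C.len (s \<otimes>\<^bsub>W\<^esub> P i) < C.len (P i)" using nQ[of i] i il by (simp add: Q_def)
  have QSi: "C.len (s \<otimes>\<^bsub>W\<^esub> P (Suc i)) < C.len (P (Suc i))" using Qj0 i by (simp add: Q_def)
  obtain p where p: "p \<in> N" "P i = H #> p" using W_rep Pc by blast
  define y where "y = ws ! i"
  have y: "y \<in> S" using ws il by (auto simp: y_def)
  obtain ny where ny: "ny \<in> y" using S_ex y by blast
  obtain ns where ns: "ns \<in> s" using S_ex s by blast
  have nsN: "ns \<in> N" using S_N s ns by blast
  have nyN: "ny \<in> N" using S_N y ny by blast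
  have tk: "take (Suc i) ws = take i ws @ [y]" using il by (simp add: y_def take_Suc_conv_app_nth)
  define q where "q = p \<otimes> ny"
  have qN: "q \<in> N" using p nyN Nm by (simp add: q_def)
  have PSi: "P (Suc i) = H #> q"
  proof -
    have "P (Suc i) = P i \<otimes>\<^bsub>W\<^esub> y" unfolding P_def tk using PS y C.S_car
      by (simp add: C.wp_append W_rone)
    then show ?thesis using cos_letter_r[OF y ny p(1)] p by (simp add: q_def)
  qed
  have Lq: "L (ns \<otimes> q) < L q" using QSi PSi cos_letter[OF s ns qN] by simp
  have Lp: "L p \<le> L (ns \<otimes> p)" using nQi p cos_letter[OF s ns p(1)] by simp
  obtain b where b: "b \<in> B" "inBB q (ns \<otimes> b \<otimes> q)" using key_desc[OF s ns qN Lq] by blast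
  have nsc: "ns \<in> carrier G" and pc: "p \<in> carrier G" and nyc: "ny \<in> carrier G" and bc: "b \<in> carrier G"
    using nsN p nyN b Nc Bc by auto
  obtain c1 c2 where cc: "c1 \<in> B" "c2 \<in> B" "ns \<otimes> b \<otimes> p = c1 \<otimes> (ns \<otimes> p) \<otimes> c2"
    using L1[OF s ns p(1) Lp b(1)] unfolding inBB_def by blast
  have c12: "c1 \<in> carrier G" "c2 \<in> carrier G" using cc Bc by auto
  have nspN: "ns \<otimes> p \<in> N" using nsN p Nm by blast
  have e: "ns \<otimes> b \<otimes> q = c1 \<otimes> ((ns \<otimes> p) \<otimes> c2 \<otimes> ny)"
  proof -
    have "ns \<otimes> b \<otimes> q = (ns \<otimes> b \<otimes> p) \<otimes> ny" using nsc bc pc nyc by (simp add: q_def m_assoc)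
    also have "\<dots> = c1 \<otimes> ((ns \<otimes> p) \<otimes> c2 \<otimes> ny)" using cc c12 nsc pc nyc by (simp add: m_assoc)
    finally show ?thesis .
  qed
  have nq: "ns \<otimes> p \<otimes> ny = ns \<otimes> q" using nsc pc nyc by (simp add: q_def m_assoc)
  have "inBB (ns \<otimes> p) ((ns \<otimes> p) \<otimes> c2 \<otimes> ny) \<or> inBB (ns \<otimes> q) ((ns \<otimes> p) \<otimes> c2 \<otimes> ny)"
    using RA[OF nspN y ny cc(2)] unfolding nq .
  then have "inBB (ns \<otimes> p) (ns \<otimes> b \<otimes> q) \<or> inBB (ns \<otimes> q) (ns \<otimes> b \<otimes> q)"
    unfolding e using inBB_l[OF _ cc(1)] nsc pc qN Nc by (meson m_closed)
  moreover have qc: "q \<in> carrier G" using qN Nc by blast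
  ultimately have "inBB q (ns \<otimes> p) \<or> inBB q (ns \<otimes> q)"
    using inBB_trans[OF b(2)] nsc pc by (meson m_closed)
  then have "H #> (ns \<otimes> p) = H #> q"
  proof
    assume "inBB q (ns \<otimes> p)" then show ?thesis using BR nspN qN by blast
  next
    assume "inBB q (ns \<otimes> q)"
    then have "H #> (ns \<otimes> q) = H #> q" using BR Nm[OF nsN qN] qN by blast
    then show ?thesis using not_fix[OF s ns qN] by blast
  qed
  then have sP: "s \<otimes>\<^bsub>W\<^esub> P i = P (Suc i)" using cos_letter[OF s ns p(1)] p PSi by simp
  define R where "R = C.wp (drop (Suc i) ws)"
  have RS: "set (drop (Suc i) ws) \<subseteq> S" using ws set_drop_subset by fastforce
  have Rc: "R \<in> carrier W" using RS by (simp add: R_def)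
  have wsd: "ws = take (Suc i) ws @ drop (Suc i) ws" by simp
  have "C.wp ws = P (Suc i) \<otimes>\<^bsub>W\<^esub> R"
    using C.wp_append[OF PS RS, of "Suc i"] wsd by (simp add: P_def R_def)
  then have "s \<otimes>\<^bsub>W\<^esub> C.wp ws = s \<otimes>\<^bsub>W\<^esub> (s \<otimes>\<^bsub>W\<^esub> P i \<otimes>\<^bsub>W\<^esub> R)" using sP by simp
  also have "\<dots> = (s \<otimes>\<^bsub>W\<^esub> s) \<otimes>\<^bsub>W\<^esub> P i \<otimes>\<^bsub>W\<^esub> R"
    using Pc Rc S_W[OF s] by (simp only: C.m_assoc C.m_closed)
  also have "\<dots> = P i \<otimes>\<^bsub>W\<^esub> R" using C.S_sq[OF s] W_lone[OF Pc[of i]] by simp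
  also have "\<dots> = C.wp (take i ws @ drop (Suc i) ws)" using C.wp_append[OF PS RS] by (simp add: P_def R_def)
  finally show ?thesis using il by blast
qed

sublocale C2: cox W S
proof (intro cox.intro cox_axioms.intro)
  show "cox0 W S" by (rule C.cox0_axioms)
next
  fix s w assume s: "s \<in> S" and w: "w \<in> carrier W"
  obtain a where a: "a \<in> N" "w = H #> a" using W_rep w by blast
  obtain ns where ns: "ns \<in> s" using S_ex s by blast
  show "C.len (s \<otimes>\<^bsub>W\<^esub> w) \<noteq> C.len w"
    using PAR[OF s ns a(1)] cos_letter[OF s ns a(1)] a by simp
next
  fix ws s assume r: "C.red ws" and s: "s \<in> S" and lt: "C.len (s \<otimes>\<^bsub>W\<^esub> C.wp ws) < C.len (C.wp ws)"
  show "\<exists>i<length ws. s \<otimes>\<^bsub>W\<^esub> C.wp ws = C.wp (take i ws @ drop (Suc i) ws)"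
    using EXCH[OF _ s lt] r by (simp add: C.red_def)
qed


lemma final_bn: assumes n0: "n0 \<in> N" and mx: "\<And>w. w \<in> carrier W \<Longrightarrow> C.len w \<le> L n0"
  and x: "x \<in> B" and xn: "inv n0 \<otimes> x \<otimes> n0 \<in> B" and n: "n \<in> N"
  shows "inv n \<otimes> x \<otimes> n \<in> B"
proof -
  have n0c: "n0 \<in> carrier G" using n0 Nc by blast
  have xc: "x \<in> carrier G" using x Bc by blast
  define v0 where "v0 = H #> inv n0"
  have v0c: "v0 \<in> carrier W" unfolding v0_def by (rule cosW[OF Ni[OF n0]])
  have "v0 \<otimes>\<^bsub>W\<^esub> (H #> n0) = H #> (inv n0 \<otimes> n0)"
    unfolding v0_def multW by (rule cos_mult[OF Ni[OF n0] n0])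
  also have "\<dots> = \<one>\<^bsub>W\<^esub>" using n0c cos_H[OF subgroup.one_closed[OF subH]] by simp
  finally have ieq: "inv\<^bsub>W\<^esub> (H #> n0) = v0" by (rule C.inv_equality[OF _ cosW[OF n0] v0c])
  have lv0: "C.len v0 = L n0" unfolding ieq[symmetric] by (rule C.len_inv[OF cosW[OF n0]])
  define P where "P w \<longleftrightarrow> (\<exists>a. a \<in> N \<and> w = H #> a \<and> a \<otimes> x \<otimes> inv a \<in> B)" for w
  have "inv n0 \<otimes> x \<otimes> inv (inv n0) \<in> B" using xn n0c by simp
  then have P0: "P v0" unfolding P_def v0_def using Ni[OF n0] by blast
  have step: "P (s \<otimes>\<^bsub>W\<^esub> w)" if w: "w \<in> carrier W" and s: "s \<in> S" and Pw: "P w"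
    and lt: "C.len (s \<otimes>\<^bsub>W\<^esub> w) < C.len w" for w s
  proof -
    obtain a where a: "a \<in> N" "w = H #> a" "a \<otimes> x \<otimes> inv a \<in> B" using Pw unfolding P_def by blast
    obtain ns where ns: "ns \<in> s" using S_ex s by blast
    have e: "H #> (ns \<otimes> a) = s \<otimes>\<^bsub>W\<^esub> w" using cos_letter[OF s ns a(1)] a by simp
    have "L (ns \<otimes> a) < L a" using lt e a by simp
    then have "(ns \<otimes> a) \<otimes> x \<otimes> inv (ns \<otimes> a) \<in> B" using ED[OF x a(1) a(3) s ns] by blast
    then show ?thesis unfolding P_def e[symmetric] using Nm[OF S_N[OF s ns] a(1)] by blast
  qed
  have mx': "\<And>w. w \<in> carrier W \<Longrightarrow> C.len w \<le> C.len v0" using mx lv0 by simp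
  have "P (H #> inv n)"
    by (rule C2.desc_chain[OF v0c mx' P0 step cosW[OF Ni[OF n]]])
  then obtain a where a: "a \<in> N" "H #> a = H #> inv n" "a \<otimes> x \<otimes> inv a \<in> B" unfolding P_def by blast
  have nc: "n \<in> carrier G" and ac: "a \<in> carrier G" using n a Nc by auto
  have "H #> inv n = H #> a" using a(2) by simp
  then have hH: "inv n \<otimes> inv a \<in> H" using cos_eq[of "inv n" a] nc ac by blast
  define h where "h = inv n \<otimes> inv a"
  have hc: "h \<in> carrier G" using nc ac by (simp add: h_def)
  have "inv n \<otimes> x \<otimes> n = h \<otimes> (a \<otimes> x \<otimes> inv a) \<otimes> inv h"
    using nc ac xc by (simp add: h_def m_assoc inv_mult_group)
  moreover have "h \<in> B" "inv h \<in> B" using hH HB Bi by (auto simp: h_def)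
  ultimately show ?thesis using a(3) Bm by simp
qed


lemma final_main:
  assumes UB: "U \<subseteq> B" and sp3: "subgroup U G" and sp6: "U \<inter> H = {\<one>}"
    and sp7: "(\<Inter>n\<in>N. (n <# B) #> inv n) = H"
    and a3: "w0 \<in> weyl_group G H N"
    and a4: "\<forall>w\<in>weyl_group G H N. weyl_length G H S w \<le> weyl_length G H S w0"
    and a5: "n0 \<in> w0"
  shows "H \<inter> ((U <#> ((inv n0 <# U) #> n0)) <#> U) = {\<one>}"
proof -
  obtain a where a: "a \<in> N" "w0 = H #> a" using a3 by (auto simp: weyl_group_def)
  obtain h where h: "h \<in> H" "n0 = h \<otimes> a" using a5 a by (auto simp: r_coset_def)
  have n0N: "n0 \<in> N" using h a HN Nm by blast
  have n0c: "n0 \<in> carrier G" using n0N Nc by blast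
  have w0e: "w0 = H #> n0" using a a5 repr_independence[OF _ _ subH] Nc by blast
  have mx: "\<And>w. w \<in> carrier W \<Longrightarrow> C.len w \<le> L n0"
    using a4 w0e carW wlen_eq by simp
  have Uc: "u \<in> U \<Longrightarrow> u \<in> carrier G" for u using UB Bc by blast
  show ?thesis
  proof
    show "H \<inter> ((U <#> ((inv n0 <# U) #> n0)) <#> U) \<subseteq> {\<one>}"
    proof
      fix g assume g: "g \<in> H \<inter> ((U <#> ((inv n0 <# U) #> n0)) <#> U)"
      then obtain u1 u u2 where uu: "u1 \<in> U" "u \<in> U" "u2 \<in> U" "g = u1 \<otimes> ((inv n0 \<otimes> u) \<otimes> n0) \<otimes> u2"
        by (auto simp: set_mult_def l_coset_def r_coset_def)
      have gH: "g \<in> H" using g by blast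
      have uc: "u1 \<in> carrier G" "u \<in> carrier G" "u2 \<in> carrier G" using uu Uc by auto
      have gc: "g \<in> carrier G" using gH Hc by blast
      have "inv n0 \<otimes> u \<otimes> n0 = inv u1 \<otimes> g \<otimes> inv u2" using uu uc n0c by (simp add: m_assoc)
      moreover have "inv u1 \<otimes> g \<otimes> inv u2 \<in> B" using uu UB gH HB Bi Bm by (meson subsetD)
      ultimately have vB: "inv n0 \<otimes> u \<otimes> n0 \<in> B" by simp
      have uB: "u \<in> B" using uu UB by blast
      have "u \<in> (\<Inter>n\<in>N. (n <# B) #> inv n)"
      proof
        fix n assume n: "n \<in> N"
        have nc: "n \<in> carrier G" using n Nc by blast
        define v where "v = inv n \<otimes> u \<otimes> n"
        have "v \<in> B" unfolding v_def using final_bn[OF n0N mx uB vB n] .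
        then have "n \<otimes> v \<otimes> inv n \<in> (n <# B) #> inv n" unfolding l_coset_def r_coset_def by blast
        moreover have "n \<otimes> v \<otimes> inv n = u" using nc uc by (simp add: v_def m_assoc)
        ultimately show "u \<in> (n <# B) #> inv n" by simp
      qed
      then have "u \<in> H" using sp7 by simp
      then have "u = \<one>" using sp6 uu by blast
      then have "g = u1 \<otimes> u2" using uu uc n0c by (simp add: m_assoc)
      then have "g \<in> U" using uu subgroup.m_closed[OF sp3] by simp
      then show "g \<in> {\<one>}" using sp6 gH by blast
    qed
  next
    show "{\<one>} \<subseteq> H \<inter> ((U <#> ((inv n0 <# U) #> n0)) <#> U)"
    proof -
      have o: "\<one> \<in> U" using subgroup.one_closed[OF sp3] .
      have "\<one> = \<one> \<otimes> ((inv n0 \<otimes> \<one>) \<otimes> n0) \<otimes> \<one>" using n0c by simp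
      then have "\<one> \<in> (U <#> ((inv n0 <# U) #> n0)) <#> U"
        unfolding set_mult_def l_coset_def r_coset_def using o by blast
      moreover have "\<one> \<in> H" using subgroup.one_closed[OF subH] .
      ultimately show ?thesis by blast
    qed
  qed
qed

end

theorem lemma7:
  fixes G :: "('a, 'b) monoid_scheme"
    and H U N :: "'a set" and S :: "'a set set" and w0 :: "'a set" and n0 :: 'a
  assumes "split_BN_pair G H U N S"
    and "finite (weyl_group G H N)"
    and "w0 \<in> weyl_group G H N"
    and "\<forall>w\<in>weyl_group G H N. weyl_length G H S w \<le> weyl_length G H S w0"
    and "n0 \<in> w0"
  shows "H \<inter> ((U <#>\<^bsub>G\<^esub> ((inv\<^bsub>G\<^esub> n0 <#\<^bsub>G\<^esub> U) #>\<^bsub>G\<^esub> n0)) <#>\<^bsub>G\<^esub> U)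
         = {\<one>\<^bsub>G\<^esub>}"
proof -
  define B where "B = U <#>\<^bsub>G\<^esub> H"
  have sp0: "BN_pair G B N S \<and> H = B \<inter> N \<and> subgroup U G \<and> subgroup H G \<and>
    normal U (G\<lparr>carrier := B\<rparr>) \<and> U \<inter> H = {\<one>\<^bsub>G\<^esub>} \<and>
    (\<Inter>n\<in>N. (n <#\<^bsub>G\<^esub> B) #>\<^bsub>G\<^esub> inv\<^bsub>G\<^esub> n) = H"
    using assms(1) unfolding split_BN_pair_def Let_def B_def .
  note sp = sp0[THEN conjunct1] sp0[THEN conjunct2, THEN conjunct1] sp0[THEN conjunct2, THEN conjunct2, THEN conjunct1] sp0[THEN conjunct2, THEN conjunct2, THEN conjunct2, THEN conjunct1] sp0[THEN conjunct2, THEN conjunct2, THEN conjunct2, THEN conjunct2, THEN conjunct1] sp0[THEN conjunct2, THEN conjunct2, THEN conjunct2, THEN conjunct2, THEN conjunct2, THEN conjunct1] sp0[THEN conjunct2, THEN conjunct2, THEN conjunct2, THEN conjunct2, THEN conjunct2, THEN conjunct2]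
  have bp0: "group G \<and> subgroup B G \<and> subgroup N G \<and>
     generate G (B \<union> N) = carrier G \<and>
     normal H (G\<lparr>carrier := N\<rparr>) \<and>
     S \<subseteq> weyl_group G H N \<and>
     (\<forall>s\<in>S. s \<noteq> H \<and> s <#>\<^bsub>G\<^esub> s = H) \<and>
     (\<forall>w\<in>weyl_group G H N. \<exists>ws. set ws \<subseteq> S \<and> coset_word_prod G H ws = w) \<and>
     (\<forall>s\<in>S. \<forall>ns\<in>s. (ns <#\<^bsub>G\<^esub> B) #>\<^bsub>G\<^esub> ns \<noteq> B) \<and>
     (\<forall>s\<in>S. \<forall>ns\<in>s. \<forall>n\<in>N.
        (ns <#\<^bsub>G\<^esub> B) #>\<^bsub>G\<^esub> n \<subseteq>
          ((B #>\<^bsub>G\<^esub> n) <#>\<^bsub>G\<^esub> B) \<union> ((B #>\<^bsub>G\<^esub> (ns \<otimes>\<^bsub>G\<^esub> n)) <#>\<^bsub>G\<^esub> B))"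
    using sp(1) unfolding BN_pair_def sp(2)[symmetric] .
  note bp = bp0[THEN conjunct1] bp0[THEN conjunct2, THEN conjunct1]
     bp0[THEN conjunct2, THEN conjunct2, THEN conjunct1]
     bp0[THEN conjunct2, THEN conjunct2, THEN conjunct2, THEN conjunct2, THEN conjunct1]
     bp0[THEN conjunct2, THEN conjunct2, THEN conjunct2, THEN conjunct2, THEN conjunct2, THEN conjunct1]
     bp0[THEN conjunct2, THEN conjunct2, THEN conjunct2, THEN conjunct2, THEN conjunct2, THEN conjunct2, THEN conjunct1]
     bp0[THEN conjunct2, THEN conjunct2, THEN conjunct2, THEN conjunct2, THEN conjunct2, THEN conjunct2, THEN conjunct2, THEN conjunct1]
     bp0[THEN conjunct2, THEN conjunct2, THEN conjunct2, THEN conjunct2, THEN conjunct2, THEN conjunct2, THEN conjunct2, THEN conjunct2, THEN conjunct1]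
     bp0[THEN conjunct2, THEN conjunct2, THEN conjunct2, THEN conjunct2, THEN conjunct2, THEN conjunct2, THEN conjunct2, THEN conjunct2, THEN conjunct2]
  interpret bn G B N H S
  proof (intro bn.intro bn_axioms.intro)
    show "group G" by (rule bp(1))
    show "subgroup B G" by (rule bp(2))
    show "subgroup N G" by (rule bp(3))
    show "H = B \<inter> N" by (rule sp(2))
    show "normal H (G\<lparr>carrier := N\<rparr>)" by (rule bp(4))
    show "S \<subseteq> weyl_group G H N" by (rule bp(5))
    show "\<And>s. s \<in> S \<Longrightarrow> s \<noteq> H" using bp(6) by blast
    show "\<And>s. s \<in> S \<Longrightarrow> s <#>\<^bsub>G\<^esub> s = H" using bp(6) by blast
    show "\<And>w. w \<in> weyl_group G H N \<Longrightarrow> \<exists>ws. set ws \<subseteq> S \<and> coset_word_prod G H ws = w"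
      using bp(7) by blast
    show "\<And>s ns. s \<in> S \<Longrightarrow> ns \<in> s \<Longrightarrow> (ns <#\<^bsub>G\<^esub> B) #>\<^bsub>G\<^esub> ns \<noteq> B" using bp(8) by blast
    show "\<And>s ns n. s \<in> S \<Longrightarrow> ns \<in> s \<Longrightarrow> n \<in> N \<Longrightarrow>
       (ns <#\<^bsub>G\<^esub> B) #>\<^bsub>G\<^esub> n \<subseteq> ((B #>\<^bsub>G\<^esub> n) <#>\<^bsub>G\<^esub> B) \<union> ((B #>\<^bsub>G\<^esub> (ns \<otimes>\<^bsub>G\<^esub> n)) <#>\<^bsub>G\<^esub> B)"
      using bp(9) by blast
  qed
  have UB: "U \<subseteq> B"
    using subgroup.subset[OF normal.axioms(1)[OF sp(5)]] by simp
  show ?thesis using final_main[OF UB sp(3) sp(6) sp(7) assms(3) assms(4) assms(5)] .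
qed

end
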